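(* Let $\mu\in\mathcal P_\varnothing(nl)$, let $R$ be an $l$-rim-hook in $\mu$, and set $\mu'=\mu-R\in\mathcal P_\varnothing((n-1)l)$. Then $\underline{\mathsf{Eig}}(\mu')$ is obtained from $\underline{\mathsf{Eig}}(\mu)$ by removing a single cell, i.e. $\underline{\mathsf{Eig}}(\mu')=\underline{\mathsf{Eig}}(\mu)-\blacksquare$ for some $\blacksquare\in\underline{\mathsf{Eig}}(\mu)$.
   Context: An $l$-rim-hook of $\mu$ is a set of $l$ cells of the rim of the Young diagram (cells $(i,j)$ with $(i+1,j+1)\notin\mu$) obtained as the intersection of the rim with $\{(i',j'):i'\ge i,\ j'\ge j\}$ for some cell $(i,j)$; removing it leaves a partition. Let $\mathbf h=(h,H_1,\dots,H_{l-1})\in\mathbb{Q}^l$ be generic, $H_0=-\sum_{i\ge1}H_i$, and $\theta=(-h+H_0,H_1,\dots,H_{l-1})$ (indices mod $l$). Let $e_0=0$ and $e_i=H_1+\dots+H_i$. For a partition $\lambda$, $t^e\mathrm{Res}_\lambda(t^h)=\sum_{\square\in\lambda}t^{e+h(j-i)}$ for $\square=(i,j)$. For $\mu$ with Frobenius form $(a_1..a_k\mid b_1..b_k)$ ($a_i=\mu_i-i$, $b_i=\mu^t_i-i$), put $r_i=b_i+1$ and $m_i=a_i+b_i+1$. Define $\alpha^{(i)}_j=\sum_{s=1}^j\theta_{r_i-s}$ for $1\le j<r_i$, $\alpha^{(i)}_j=-\sum_{s=0}^{m_i-j-1}\theta_{-m_i+r_i+s}$ for $r_i\le j\le m_i-1$,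 and $\alpha^{(i)}_{m_i}=0$. Let $\mathrm{Eig}(\mu)=\sum_{i}\sum_{1\le j\le m_i,\ j\equiv r_i-1\ (l)}t^{\alpha^{(i)}_j}$. $\underline{\mathsf{Eig}}(\mu)$ is the unique $l$-multipartition $(\lambda^0,\dots,\lambda^{l-1})$ with $\sum_j t^{e_j}\mathrm{Res}_{\lambda^j}(t^h)=\mathrm{Eig}(\mu)$; the paper shows this exists and is unique for generic $\mathbf h$, for every partition with empty $l$-core. Removing a cell from a multipartition means removing it from one of its components. *)

theory Defs
  imports Complex_Main "HOL-Library.Multiset"
begin

type_synonym cell = "nat \<times> nat"

text \<open>Young diagrams: finite sets of cells (i,j) with i,j \<ge> 1 (row i, column j),
closed under moving up/left.\<close>
definition is_partition :: "cell set \<Rightarrow> bool" where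
  "is_partition mu \<longleftrightarrow> finite mu \<and> (\<forall>(i,j)\<in>mu. 1 \<le> i \<and> 1 \<le> j) \<and>
     (\<forall>(i,j)\<in>mu. \<forall>i' j'. 1 \<le> i' \<and> i' \<le> i \<and> 1 \<le> j' \<and> j' \<le> j \<longrightarrow> (i',j') \<in> mu)"

definition rim :: "cell set \<Rightarrow> cell set" where
  "rim mu = {(i,j). (i,j) \<in> mu \<and> (i+1, j+1) \<notin> mu}"

definition is_rim_hook :: "nat \<Rightarrow> cell set \<Rightarrow> cell set \<Rightarrow> bool" where
  "is_rim_hook l mu R \<longleftrightarrow>
     (\<exists>(i,j)\<in>mu. R = {(i',j'). (i',j') \<in> rim mu \<and> i \<le> i' \<and> j \<le> j'})
     \<and> card R = l \<and> is_partition (mu - R)"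

inductive empty_core :: "nat \<Rightarrow> cell set \<Rightarrow> bool" for l where
  empty: "empty_core l {}"
| step: "is_rim_hook l mu R \<Longrightarrow> empty_core l (mu - R) \<Longrightarrow> empty_core l mu"

text \<open>Parameters: p 0 = h, p i = H_i for 1 \<le> i \<le> l-1.\<close>
definition H0 :: "nat \<Rightarrow> (nat \<Rightarrow> rat) \<Rightarrow> rat" where
  "H0 l p = - (\<Sum>i\<in>{1..<l}. p i)"

definition theta :: "nat \<Rightarrow> (nat \<Rightarrow> rat) \<Rightarrow> int \<Rightarrow> rat" where
  "theta l p k = (let m = nat (k mod int l) in if m = 0 then - p 0 + H0 l p else p m)"

definition eshift :: "(nat \<Rightarrow> rat) \<Rightarrow> nat \<Rightarrow> rat" where
  "eshift p k = (\<Sum>i\<in>{1..k}. p i)"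

text \<open>t^e Res_lambda(t^h) as a multiset of exponents.\<close>
definition res :: "rat \<Rightarrow> rat \<Rightarrow> cell set \<Rightarrow> rat multiset" where
  "res e h lam = image_mset (\<lambda>(i,j). e + h * (of_int (int j - int i))) (mset_set lam)"

definition rowlen :: "cell set \<Rightarrow> nat \<Rightarrow> nat" where
  "rowlen mu i = card {j. (i,j) \<in> mu}"

definition collen :: "cell set \<Rightarrow> nat \<Rightarrow> nat" where
  "collen mu j = card {i. (i,j) \<in> mu}"

definition frob_rank :: "cell set \<Rightarrow> nat" where
  "frob_rank mu = card {i. (i,i) \<in> mu}"

definition frob_a :: "cell set \<Rightarrow> nat \<Rightarrow> int" where
  "frob_a mu i = int (rowlen mu i) - int i"

definition frob_b :: "cell set \<Rightarrow> nat \<Rightarrow> int" where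
  "frob_b mu i = int (collen mu i) - int i"

definition frob_r :: "cell set \<Rightarrow> nat \<Rightarrow> int" where
  "frob_r mu i = frob_b mu i + 1"

definition frob_m :: "cell set \<Rightarrow> nat \<Rightarrow> int" where
  "frob_m mu i = frob_a mu i + frob_b mu i + 1"

definition alpha :: "nat \<Rightarrow> (nat \<Rightarrow> rat) \<Rightarrow> cell set \<Rightarrow> nat \<Rightarrow> int \<Rightarrow> rat" where
  "alpha l p mu i j =
    (let r = frob_r mu i; m = frob_m mu i in
     if 1 \<le> j \<and> j < r then (\<Sum>s\<in>{1..j}. theta l p (r - s))
     else if r \<le> j \<and> j \<le> m - 1 then - (\<Sum>s\<in>{0..m - j - 1}. theta l p (- m + r + s))
     else 0)"

definition Eig :: "nat \<Rightarrow> (nat \<Rightarrow> rat) \<Rightarrow> cell set \<Rightarrow> rat multiset" where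
  "Eig l p mu = (\<Sum>i\<in>{1..frob_rank mu}.
      image_mset (alpha l p mu i)
        (mset_set {j \<in> {1..frob_m mu i}. j mod int l = (frob_r mu i - 1) mod int l}))"

definition is_multipartition :: "nat \<Rightarrow> (nat \<Rightarrow> cell set) \<Rightarrow> bool" where
  "is_multipartition l Lam \<longleftrightarrow> (\<forall>k<l. is_partition (Lam k)) \<and> (\<forall>k\<ge>l. Lam k = {})"

definition EigMP :: "nat \<Rightarrow> (nat \<Rightarrow> rat) \<Rightarrow> cell set \<Rightarrow> (nat \<Rightarrow> cell set)" where
  "EigMP l p mu = (THE Lam. is_multipartition l Lam \<and>
       (\<Sum>k<l. res (eshift p k) (p 0) (Lam k)) = Eig l p mu)"

end

theory Submission
  imports Defs
begin


lemma init_seg: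
  fixes S :: "nat set"
  assumes "finite S" "\<forall>j\<in>S. 1 \<le> j" "\<forall>j\<in>S. \<forall>j'. 1 \<le> j' \<and> j' \<le> j \<longrightarrow> j' \<in> S"
  shows "S = {1..card S}"
proof (cases "S = {}")
  case True then show ?thesis by simp
next
  case False
  define M where "M = Max S"
  have M: "M \<in> S" using False assms(1) M_def by simp
  have "S = {1..M}"
  proof
    show "S \<subseteq> {1..M}" using assms(1,2) M_def by auto
    show "{1..M} \<subseteq> S" using assms(3) M by auto
  qed
  then show ?thesis by simp
qed

lemma part_row:
  assumes "is_partition mu" "1 \<le> i"
  shows "{j. (i,j) \<in> mu} = {1..rowlen mu i}"
proof -
  have fin: "finite {j. (i,j) \<in> mu}"
  proof -
    have "{j. (i,j) \<in> mu} \<subseteq> snd ` mu" by force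
    then show ?thesis using assms(1) unfolding is_partition_def by (meson finite_surj)
  qed
  show ?thesis unfolding rowlen_def
    apply (rule init_seg[OF fin])
    using assms(1) unfolding is_partition_def by fastforce+
qed

lemma mem_iff:
  assumes "is_partition mu"
  shows "(i,j) \<in> mu \<longleftrightarrow> 1 \<le> i \<and> 1 \<le> j \<and> j \<le> rowlen mu i"
proof (cases "1 \<le> i")
  case True
  then show ?thesis using part_row[OF assms True] by (metis atLeastAtMost_iff mem_Collect_eq)
next
  case False
  then show ?thesis using assms unfolding is_partition_def by auto
qed

lemma rowlen_mono:
  assumes "is_partition mu" "1 \<le> i" "i \<le> i'"
  shows "rowlen mu i' \<le> rowlen mu i"
proof (cases "rowlen mu i' = 0")
  case True then show ?thesis by simp
next
  case False
  have "(i', rowlen mu i') \<in> mu" using mem_iff[OF assms(1)] False assms by auto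
  then have "(i, rowlen mu i') \<in> mu" using assms(1) assms(2,3) False unfolding is_partition_def by fastforce
  then show ?thesis using mem_iff[OF assms(1)] by auto
qed

definition tr :: "cell set \<Rightarrow> cell set" where
  "tr mu = (\<lambda>(i,j). (j,i)) ` mu"

lemma tr_mem[simp]: "(i,j) \<in> tr mu \<longleftrightarrow> (j,i) \<in> mu"
  unfolding tr_def by force

lemma tr_tr[simp]: "tr (tr mu) = mu"
  by (rule set_eqI, case_tac x, simp)

lemma tr_inj: "inj_on (\<lambda>(i,j). (j,i)) (A::cell set)"
  by (auto simp: inj_on_def)

lemma tr_card: "card (tr mu) = card mu"
  unfolding tr_def by (rule card_image) (auto simp: inj_on_def)

lemma tr_diff: "tr (A - B) = tr A - tr B"
  by (rule set_eqI, case_tac x, simp)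

lemma tr_partition: 
  assumes "is_partition mu" shows "is_partition (tr mu)"
proof -
  have h: "\<And>i j i' j'. (i,j)\<in>mu \<Longrightarrow> 1\<le>i' \<Longrightarrow> i'\<le>i \<Longrightarrow> 1\<le>j' \<Longrightarrow> j'\<le>j \<Longrightarrow> (i',j')\<in>mu"
    using assms unfolding is_partition_def by blast
  have h2: "\<And>i j. (i,j)\<in>mu \<Longrightarrow> 1 \<le> i \<and> 1 \<le> j" using assms unfolding is_partition_def by blast
  have f: "finite (tr mu)" using assms unfolding is_partition_def tr_def by auto
  show ?thesis unfolding is_partition_def
    apply (intro conjI f)
     apply clarify
    using h2 apply simp
    apply clarify
    using h by simp
qed

lemma rowlen_tr: "rowlen (tr mu) = collen mu"
  unfolding rowlen_def collen_def by auto

lemma collen_tr: "collen (tr mu) = rowlen mu"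
  unfolding rowlen_def collen_def by auto

lemma rim_tr: "rim (tr mu) = tr (rim mu)"
  unfolding rim_def by auto

lemma frob_rank_tr: "frob_rank (tr mu) = frob_rank mu"
  unfolding frob_rank_def by auto

lemma mem_iff_col:
  assumes "is_partition mu"
  shows "(i,j) \<in> mu \<longleftrightarrow> 1 \<le> i \<and> 1 \<le> j \<and> i \<le> collen mu j"
  using mem_iff[OF tr_partition[OF assms], of j i] by (auto simp add: rowlen_tr)

lemma diag_set:
  assumes "is_partition mu"
  shows "{i. (i,i) \<in> mu} = {1..frob_rank mu}"
proof -
  have fin: "finite {i. (i,i) \<in> mu}"
  proof -
    have "{i. (i,i) \<in> mu} \<subseteq> fst ` mu" by force
    then show ?thesis using assms(1) unfolding is_partition_def by (meson finite_surj)
  qed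
  show ?thesis unfolding frob_rank_def
    apply (rule init_seg[OF fin])
    using assms(1) unfolding is_partition_def by fastforce+
qed

lemma diag_iff:
  assumes "is_partition mu"
  shows "(i,i) \<in> mu \<longleftrightarrow> 1 \<le> i \<and> i \<le> rowlen mu i"
  using mem_iff[OF assms] by auto

definition xf :: "cell set \<Rightarrow> nat \<Rightarrow> int" where
  "xf mu i = int (rowlen mu i) - int i"

definition Aset :: "cell set \<Rightarrow> int set" where
  "Aset mu = {xf mu i | i. 1 \<le> i \<and> 0 \<le> xf mu i}"

lemma xf_strict:
  assumes "is_partition mu" "1 \<le> i" "i < i'"
  shows "xf mu i' < xf mu i"
  using rowlen_mono[OF assms(1,2), of i'] assms(3) unfolding xf_def by linarith

lemma xf_inj:
  assumes "is_partition mu" "1 \<le> i" "1 \<le> i'" "xf mu i = xf mu i'"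
  shows "i = i'"
  using xf_strict[OF assms(1) assms(2)] xf_strict[OF assms(1) assms(3)] assms(4)
  by (metis less_irrefl nat_neq_iff)

lemma Aset_frob:
  assumes "is_partition mu"
  shows "Aset mu = frob_a mu ` {1..frob_rank mu}" "inj_on (frob_a mu) {1..frob_rank mu}"
proof -
  have fa: "frob_a mu = xf mu" unfolding frob_a_def xf_def by auto
  have d: "\<And>i. 1 \<le> i \<Longrightarrow> (i \<in> {1..frob_rank mu} \<longleftrightarrow> 0 \<le> xf mu i)"
    using diag_set[OF assms] diag_iff[OF assms] unfolding xf_def by (metis (no_types, lifting) atLeastAtMost_iff mem_Collect_eq of_nat_le_iff diff_ge_0_iff_ge)
  show "Aset mu = frob_a mu ` {1..frob_rank mu}"
    unfolding Aset_def fa using d by fastforce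
  show "inj_on (frob_a mu) {1..frob_rank mu}"
    unfolding fa inj_on_def using xf_inj[OF assms] by auto
qed

lemma Aset_nonneg: "a \<in> Aset mu \<Longrightarrow> 0 \<le> a"
  unfolding Aset_def by auto

lemma Aset_finite:
  assumes "is_partition mu" shows "finite (Aset mu)"
  using Aset_frob[OF assms] by simp


lemma tele_int:
  fixes g :: "nat \<Rightarrow> int"
  shows "a \<le> b \<Longrightarrow> (\<Sum>i\<in>{a..b}. (g i - g (Suc i))) = g a - g (Suc b)"
proof (induction b)
  case 0 then show ?case by simp
next
  case (Suc b)
  show ?case
  proof (cases "a \<le> b")
    case True
    then show ?thesis using Suc by (simp add: sum.cl_ivl_Suc)
  next
    case False
    then have "a = Suc b" using Suc.prems by simp
    then show ?thesis by simp
  qed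
qed

lemma hook_row:
  assumes part: "is_partition mu" and ij: "(i0,j0) \<in> mu"
    and Rdef: "R = {(i',j'). (i',j') \<in> rim mu \<and> i0 \<le> i' \<and> j0 \<le> j'}"
    and cR: "card R = l" and l1: "1 \<le> l" and part': "is_partition (mu - R)"
  shows "xf mu i0 - int l = int j0 - 1 - int (collen mu j0)"
    and "Aset (mu - R) = (Aset mu - {xf mu i0}) \<union> (if 0 \<le> xf mu i0 - int l then {xf mu i0 - int l} else {})"
    and "xf mu i0 - int l \<notin> Aset mu"
    and "0 \<le> xf mu i0 \<Longrightarrow> xf mu i0 \<in> Aset mu"
proof -
  define m where "m = rowlen mu"
  define i1 where "i1 = collen mu j0"
  have F1: "1 \<le> i0" "1 \<le> j0" "j0 \<le> m i0" "i0 \<le> i1"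
    using ij mem_iff[OF part] mem_iff_col[OF part] unfolding m_def i1_def by auto
  have F2: "\<And>i. 1 \<le> i \<Longrightarrow> (i \<le> i1 \<longleftrightarrow> j0 \<le> m i)"
    using mem_iff[OF part] mem_iff_col[OF part] F1 unfolding m_def i1_def by blast
  have mono: "\<And>i i'. 1 \<le> i \<Longrightarrow> i \<le> i' \<Longrightarrow> m i' \<le> m i"
    using rowlen_mono[OF part] unfolding m_def by blast
  have F3: "R = {(i,j). i0 \<le> i \<and> j0 \<le> j \<and> j \<le> m i \<and> m (Suc i) \<le> j}"
  proof (rule set_eqI)
    fix x show "x \<in> R \<longleftrightarrow> x \<in> {(i,j). i0 \<le> i \<and> j0 \<le> j \<and> j \<le> m i \<and> m (Suc i) \<le> j}"
      unfolding Rdef rim_def using mem_iff[OF part] F1 unfolding m_def by (cases x) auto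
  qed
  have F4: "R = Sigma {i0..i1} (\<lambda>i. {max j0 (m (Suc i)) .. m i})"
  proof (rule set_eqI)
    fix x :: cell
    obtain i j where x: "x = (i,j)" by (cases x)
    have "i0 \<le> i \<Longrightarrow> j0 \<le> j \<Longrightarrow> j \<le> m i \<Longrightarrow> i \<le> i1" using F2[of i] F1 by linarith
    then show "x \<in> R \<longleftrightarrow> x \<in> Sigma {i0..i1} (\<lambda>i. {max j0 (m (Suc i)) .. m i})"
      unfolding F3 x by auto
  qed
  define g where "g i = int (max j0 (m i))" for i
  have cardR: "int l = (\<Sum>i\<in>{i0..i1}. (g i - g (Suc i))) + (int i1 - int i0 + 1)"
  proof -
    have "l = (\<Sum>i\<in>{i0..i1}. card {max j0 (m (Suc i)) .. m i})"
      using cR F4 by (simp add: card_SigmaI)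
    then have "int l = (\<Sum>i\<in>{i0..i1}. int (card {max j0 (m (Suc i)) .. m i}))" by simp
    also have "\<dots> = (\<Sum>i\<in>{i0..i1}. (g i - g (Suc i) + 1))"
    proof (rule sum.cong)
      fix i assume i: "i \<in> {i0..i1}"
      then have "j0 \<le> m i" "m (Suc i) \<le> m i" using F2[of i] F1 mono[of i "Suc i"] by auto
      then show "int (card {max j0 (m (Suc i)) .. m i}) = g i - g (Suc i) + 1"
        unfolding g_def by auto
    qed simp
    also have "\<dots> = (\<Sum>i\<in>{i0..i1}. (g i - g (Suc i))) + (int i1 - int i0 + 1)"
      using F1 by (simp add: sum.distrib)
    finally show ?thesis .
  qed
  have g0: "g i0 = int (m i0)" using F1 unfolding g_def by auto
  have g1: "g (Suc i1) = int j0"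
  proof -
    have "\<not> j0 \<le> m (Suc i1)" using F2[of "Suc i1"] by auto
    then show ?thesis unfolding g_def by auto
  qed
  have lval: "int l = int (m i0) - int j0 + int i1 - int i0 + 1"
    using cardR tele_int[of i0 i1 g] F1 g0 g1 by simp
  show E1: "xf mu i0 - int l = int j0 - 1 - int (collen mu j0)"
    using lval unfolding xf_def m_def i1_def by simp
  have rl': "\<And>i. rowlen (mu - R) i = (if i0 \<le> i \<and> i \<le> i1 then max j0 (m (Suc i)) - 1 else m i)"
  proof -
    fix i
    show "rowlen (mu - R) i = (if i0 \<le> i \<and> i \<le> i1 then max j0 (m (Suc i)) - 1 else m i)"
    proof (cases "i0 \<le> i \<and> i \<le> i1")
      case True
      then have "j0 \<le> m i" "m (Suc i) \<le> m i" using F2[of i] F1 mono[of i "Suc i"] by auto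
      then have "{j. (i,j) \<in> mu - R} = {1..max j0 (m (Suc i)) - 1}"
        using True F1 mem_iff[OF part] unfolding F4 m_def by auto
      then show ?thesis using True unfolding rowlen_def by simp
    next
      case False
      then have "{j. (i,j) \<in> mu - R} = {j. (i,j) \<in> mu}" unfolding F4 by auto
      then show ?thesis using False unfolding rowlen_def m_def by (simp only: if_False if_P)
    qed
  qed
  define x where "x = xf mu"
  define x' where "x' = xf (mu - R)"
  have X1: "\<And>i. \<not> (i0 \<le> i \<and> i \<le> i1) \<Longrightarrow> x' i = x i"
  proof -
    fix i assume a: "\<not> (i0 \<le> i \<and> i \<le> i1)"
    have "rowlen (mu - R) i = m i" by (subst rl') (simp only: if_not_P[OF a])
    then show "x' i = x i" unfolding x'_def x_def xf_def m_def by simp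
  qed
  have X2: "\<And>i. i0 \<le> i \<Longrightarrow> i < i1 \<Longrightarrow> x' i = x (Suc i)"
  proof -
    fix i assume a: "i0 \<le> i" "i < i1"
    then have "j0 \<le> m (Suc i)" using F2[of "Suc i"] F1 by auto
    then show "x' i = x (Suc i)" unfolding x'_def x_def xf_def using rl' a F1 m_def by auto
  qed
  have X3: "x' i1 = x i0 - int l"
    unfolding x'_def using rl' F1 E1 F2[of "Suc i1"] unfolding xf_def x_def m_def i1_def by auto
  have xinj: "\<And>i i'. 1 \<le> i \<Longrightarrow> 1 \<le> i' \<Longrightarrow> x i = x i' \<Longrightarrow> i = i'"
    using xf_inj[OF part] unfolding x_def by blast
  have xinj': "\<And>i i'. 1 \<le> i \<Longrightarrow> 1 \<le> i' \<Longrightarrow> x' i = x' i' \<Longrightarrow> i = i'"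
    using xf_inj[OF part'] unfolding x'_def by blast
  have bk: "\<And>i. 1 \<le> i \<Longrightarrow> i \<noteq> i0 \<Longrightarrow> \<exists>i'. 1 \<le> i' \<and> i' \<noteq> i1 \<and> x' i' = x i"
  proof -
    fix i assume i: "1 \<le> i" "i \<noteq> i0"
    show "\<exists>i'. 1 \<le> i' \<and> i' \<noteq> i1 \<and> x' i' = x i"
    proof (cases "i0 \<le> i \<and> i \<le> i1")
      case True
      then have "i0 \<le> i - 1" "i - 1 < i1" "Suc (i - 1) = i" using i by auto
      then show ?thesis using X2[of "i - 1"] F1 by (intro exI[of _ "i - 1"]) auto
    next
      case False
      then show ?thesis using X1[of i] i F1 by (intro exI[of _ i]) auto
    qed
  qed
  have fwd: "\<And>i. 1 \<le> i \<Longrightarrow> i \<noteq> i1 \<Longrightarrow> \<exists>i'. 1 \<le> i' \<and> i' \<noteq> i0 \<and> x i' = x' i"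
  proof -
    fix i assume i: "1 \<le> i" "i \<noteq> i1"
    show "\<exists>i'. 1 \<le> i' \<and> i' \<noteq> i0 \<and> x i' = x' i"
    proof (cases "i0 \<le> i \<and> i \<le> i1")
      case True
      then show ?thesis using X2[of i] i by (intro exI[of _ "Suc i"]) auto
    next
      case False
      then show ?thesis using X1[of i] i F1 by (intro exI[of _ i]) auto
    qed
  qed
  show nm: "xf mu i0 - int l \<notin> Aset mu"
  proof
    assume "xf mu i0 - int l \<in> Aset mu"
    then obtain i where i: "1 \<le> i" "x i = x i0 - int l" unfolding Aset_def x_def by auto
    have "i \<noteq> i0" using i l1 by auto
    then obtain i' where "1 \<le> i'" "i' \<noteq> i1" "x' i' = x i" using bk i by blast
    then show False using X3 i xinj'[of i' i1] F1 by auto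
  qed
  show "0 \<le> xf mu i0 \<Longrightarrow> xf mu i0 \<in> Aset mu" unfolding Aset_def using F1 by auto
  show "Aset (mu - R) = (Aset mu - {xf mu i0}) \<union> (if 0 \<le> xf mu i0 - int l then {xf mu i0 - int l} else {})"
  proof (rule set_eqI)
    fix v
    show "v \<in> Aset (mu - R) \<longleftrightarrow> v \<in> (Aset mu - {xf mu i0}) \<union> (if 0 \<le> xf mu i0 - int l then {xf mu i0 - int l} else {})"
    proof
      assume "v \<in> Aset (mu - R)"
      then obtain i where i: "1 \<le> i" "v = x' i" "0 \<le> x' i" unfolding Aset_def x'_def by auto
      show "v \<in> (Aset mu - {xf mu i0}) \<union> (if 0 \<le> xf mu i0 - int l then {xf mu i0 - int l} else {})"
      proof (cases "i = i1")
        case True then show ?thesis using i X3 unfolding x_def by auto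
      next
        case False
        then obtain i' where i': "1 \<le> i'" "i' \<noteq> i0" "x i' = x' i" using fwd i by blast
        then have "x i' \<noteq> x i0" using xinj F1 by blast
        moreover have "v \<in> Aset mu" unfolding Aset_def using i i' unfolding x_def
          by (metis (mono_tags, lifting) mem_Collect_eq)
        ultimately show ?thesis using i i' unfolding x_def by auto
      qed
    next
      assume "v \<in> (Aset mu - {xf mu i0}) \<union> (if 0 \<le> xf mu i0 - int l then {xf mu i0 - int l} else {})"
      then show "v \<in> Aset (mu - R)"
      proof
        assume "v \<in> Aset mu - {xf mu i0}"
        then obtain i where i: "1 \<le> i" "v = x i" "0 \<le> x i" "i \<noteq> i0" unfolding Aset_def x_def by auto
        then obtain i' where i': "1 \<le> i'" "x' i' = x i" using bk by blast
        then show ?thesis using i unfolding Aset_def x'_def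
          by (metis (mono_tags, lifting) mem_Collect_eq)
      next
        assume "v \<in> (if 0 \<le> xf mu i0 - int l then {xf mu i0 - int l} else {})"
        then have "v = x' i1" "0 \<le> x' i1" using X3 unfolding x_def by (auto split: if_splits)
        then show ?thesis using F1 unfolding Aset_def x'_def
          by (metis (mono_tags, lifting) mem_Collect_eq le_trans)
      qed
    qed
  qed
qed


definition Bset :: "cell set \<Rightarrow> int set" where
  "Bset mu = Aset (tr mu)"

lemma xf_tr: "xf (tr mu) i = int (collen mu i) - int i"
  unfolding xf_def rowlen_tr by simp

lemma hook_AB:
  assumes part: "is_partition mu" and hk: "is_rim_hook l mu R" and l1: "1 \<le> l"
  shows "\<exists>x0. (int l \<le> x0 \<and> x0 \<in> Aset mu \<and> x0 - int l \<notin> Aset mu \<and>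
               Aset (mu - R) = (Aset mu - {x0}) \<union> {x0 - int l} \<and> Bset (mu - R) = Bset mu)
          \<or> (int l \<le> int l - 1 - x0 \<and> int l - 1 - x0 \<in> Bset mu \<and> int l - 1 - x0 - int l \<notin> Bset mu \<and>
               Bset (mu - R) = (Bset mu - {int l - 1 - x0}) \<union> {int l - 1 - x0 - int l} \<and> Aset (mu - R) = Aset mu)
          \<or> (0 \<le> x0 \<and> 0 \<le> int l - 1 - x0 \<and> x0 \<in> Aset mu \<and> int l - 1 - x0 \<in> Bset mu \<and>
               Aset (mu - R) = Aset mu - {x0} \<and> Bset (mu - R) = Bset mu - {int l - 1 - x0})"
proof -
  obtain i0 j0 where ij: "(i0,j0) \<in> mu" and Rd: "R = {(i',j'). (i',j') \<in> rim mu \<and> i0 \<le> i' \<and> j0 \<le> j'}"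
    and cR: "card R = l" and p': "is_partition (mu - R)"
    using hk unfolding is_rim_hook_def by auto
  note H = hook_row[OF part ij Rd cR l1 p']
  have ij': "(j0,i0) \<in> tr mu" using ij by simp
  have Rd': "tr R = {(i',j'). (i',j') \<in> rim (tr mu) \<and> j0 \<le> i' \<and> i0 \<le> j'}"
    unfolding Rd rim_tr by (rule set_eqI, case_tac x, auto)
  have cR': "card (tr R) = l" using cR tr_card by simp
  have p'': "is_partition (tr mu - tr R)" using tr_partition[OF p'] tr_diff by simp
  note H' = hook_row[OF tr_partition[OF part] ij' Rd' cR' l1 p'']
  define x0 where "x0 = xf mu i0"
  have y0: "xf (tr mu) j0 = int l - 1 - x0"
    using H(1) H'(1) unfolding x0_def xf_tr collen_tr xf_def by simp
  have AB': "Bset (mu - R) = Aset (tr mu - tr R)" unfolding Bset_def tr_diff by simp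
  have nonneg: "\<And>v. v \<in> Aset (tr mu) \<Longrightarrow> 0 \<le> v" "\<And>v. v \<in> Aset mu \<Longrightarrow> 0 \<le> v" using Aset_nonneg by auto
  consider "int l \<le> x0" | "x0 < 0" | "0 \<le> x0 \<and> x0 < int l" by linarith
    then show ?thesis
    proof cases
      case 1
      have "Bset (mu - R) = Bset mu"
        unfolding AB' H'(2) y0 unfolding Bset_def using 1 nonneg(1)[of "int l - 1 - x0"] by auto
      then show ?thesis using 1 H(2,3,4) unfolding x0_def by (intro exI[of _ x0]) (auto simp: x0_def)
    next
      case 2
      have "Aset (mu - R) = Aset mu" unfolding H(2) using 2 nonneg(2)[of x0] unfolding x0_def by auto
      then show ?thesis using 2 H'(2,3,4) unfolding AB' y0 Bset_def by (intro exI[of _ x0]) (auto simp: tr_diff)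
    next
      case 3
      have "Aset (mu - R) = Aset mu - {x0}" unfolding H(2) using 3 unfolding x0_def by auto
      moreover have "Bset (mu - R) = Bset mu - {int l - 1 - x0}"
        unfolding AB' H'(2) y0 unfolding Bset_def using 3 by auto
      ultimately show ?thesis using 3 H(4) H'(4) unfolding y0 Bset_def by (intro exI[of _ x0]) (auto simp: x0_def tr_diff)
    qed
qed



definition Tf :: "nat \<Rightarrow> (nat \<Rightarrow> rat) \<Rightarrow> int \<Rightarrow> rat" where
  "Tf l p n = - p 0 * of_int ((n - 1) div int l) + eshift p (nat ((n - 1) mod int l))"

lemma eshift0[simp]: "eshift p 0 = 0" unfolding eshift_def by simp

lemma eshift_Suc: "eshift p (Suc k) = eshift p k + p (Suc k)"
  unfolding eshift_def by simp

lemma T_step: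
  assumes "1 \<le> l"
  shows "Tf l p (n+1) - Tf l p n = theta l p n"
proof -
  define q where "q = n div int l"
  define r where "r = n mod int l"
  have lpos: "0 < int l" using assms by simp
  have n: "n = q * int l + r" unfolding q_def r_def by simp
  have r: "0 \<le> r" "r < int l" unfolding r_def using lpos by auto
  have T1: "Tf l p (n+1) = - p 0 * of_int q + eshift p (nat r)" unfolding Tf_def q_def r_def by simp
  have T0: "Tf l p n = - p 0 * of_int ((n-1) div int l) + eshift p (nat ((n - 1) mod int l))" by (simp add: Tf_def)
  show ?thesis
  proof (cases "r = 0")
    case True
    have d1: "(n - 1) div int l = q - 1"
    proof -
      have e: "n - 1 = (int l - 1) + (q - 1) * int l" using n True by (simp add: algebra_simps)
      have "(int l - 1) div int l = 0" using lpos by simp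
      then have "((int l - 1) + (q - 1) * int l) div int l = q - 1" using lpos by (subst div_mult_self1) auto
      then show ?thesis by (simp only: e)
    qed
    have m1: "(n - 1) mod int l = int l - 1"
    proof -
      have e: "n - 1 = (int l - 1) + (q - 1) * int l" using n True by (simp add: algebra_simps)
      have "((int l - 1) + (q - 1) * int l) mod int l = (int l - 1) mod int l" by (rule mod_mult_self1)
      also have "\<dots> = int l - 1" using lpos by (intro mod_pos_pos_trivial) auto
      finally have "((int l - 1) + (q - 1) * int l) mod int l = int l - 1" .
      then show ?thesis by (simp only: e)
    qed
    have th: "theta l p n = - p 0 + H0 l p" unfolding theta_def Let_def using True r_def by simp
    have e: "eshift p (nat (int l - 1)) = (\<Sum>i\<in>{1..<l}. p i)"
      unfolding eshift_def using assms by (intro sum.cong) auto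
    show ?thesis unfolding T1 T0 th H0_def d1 m1 e True
      by (simp add: algebra_simps)
  next
    case False
    have d1: "(n - 1) div int l = q" and m1: "(n - 1) mod int l = r - 1"
    proof -
      have e: "n - 1 = (r - 1) + q * int l" using n by simp
      have "(r - 1) div int l = 0" "(r - 1) mod int l = r - 1" using r False by auto
      then have "((r - 1) + q * int l) div int l = q" "((r - 1) + q * int l) mod int l = r - 1"
        using lpos by (subst div_mult_self1, auto)
      then show "(n - 1) div int l = q" "(n - 1) mod int l = r - 1" by (simp_all only: e)
    qed
    have th: "theta l p n = p (nat r)" unfolding theta_def Let_def using False r r_def by auto
    have e: "eshift p (nat r) = eshift p (nat (r - 1)) + p (nat r)"
      using eshift_Suc[of p "nat (r - 1)"] False r by (simp add: Suc_nat_eq_nat_zadd1)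
    show ?thesis unfolding T1 T0 th d1 m1 e
      by (simp add: algebra_simps)
  qed
qed


lemma sum1:
  assumes "1 \<le> l"
  shows "(\<Sum>s\<in>{1..int k}. theta l p (r - s)) = Tf l p r - Tf l p (r - int k)"
proof (induction k)
  case 0 then show ?case by simp
next
  case (Suc k)
  have "{1..int (Suc k)} = insert (int k + 1) {1..int k}" by auto
  then have "(\<Sum>s\<in>{1..int (Suc k)}. theta l p (r - s)) = theta l p (r - (int k + 1)) + (\<Sum>s\<in>{1..int k}. theta l p (r - s))"
    by simp
  also have "theta l p (r - (int k + 1)) = Tf l p (r - int k) - Tf l p (r - int k - 1)"
    using T_step[OF assms, of p "r - int k - 1"] by (simp add: algebra_simps)
  finally show ?case using Suc.IH by (simp add: algebra_simps)
qed

lemma sum2: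
  assumes "1 \<le> l"
  shows "(\<Sum>s\<in>{0..int k - 1}. theta l p (u + s)) = Tf l p (u + int k) - Tf l p u"
proof (induction k)
  case 0 then show ?case by simp
next
  case (Suc k)
  have "{0..int (Suc k) - 1} = insert (int k) {0..int k - 1}" by auto
  then have "(\<Sum>s\<in>{0..int (Suc k) - 1}. theta l p (u + s)) = theta l p (u + int k) + (\<Sum>s\<in>{0..int k - 1}. theta l p (u + s))"
    by simp
  also have "theta l p (u + int k) = Tf l p (u + int k + 1) - Tf l p (u + int k)"
    using T_step[OF assms, of p "u + int k"] by (simp add: algebra_simps)
  finally show ?case using Suc.IH by (simp add: algebra_simps)
qed

definition alpha0 :: "nat \<Rightarrow> (nat \<Rightarrow> rat) \<Rightarrow> int \<Rightarrow> int \<Rightarrow> int \<Rightarrow> rat" where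
  "alpha0 l p r m j =
     (if 1 \<le> j \<and> j < r then (\<Sum>s\<in>{1..j}. theta l p (r - s))
      else if r \<le> j \<and> j \<le> m - 1 then - (\<Sum>s\<in>{0..m - j - 1}. theta l p (- m + r + s))
      else 0)"

lemma alpha_alpha0: "alpha l p mu i = alpha0 l p (frob_r mu i) (frob_m mu i)"
  unfolding alpha_def alpha0_def Let_def by (rule ext) simp

lemma alpha0_1:
  assumes "1 \<le> l" "1 \<le> j" "j < r"
  shows "alpha0 l p r m j = Tf l p r - Tf l p (r - j)"
proof -
  have "j = int (nat j)" using assms by simp
  then show ?thesis unfolding alpha0_def using assms sum1[OF assms(1), where k="nat j" and p=p and r=r] by simp
qed

lemma alpha0_2:
  assumes "1 \<le> l" "1 \<le> r" "r \<le> j" "j \<le> m"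
  shows "alpha0 l p r m j = Tf l p (r - m) - Tf l p (r - j)"
proof (cases "j = m")
  case True then show ?thesis unfolding alpha0_def using assms by simp
next
  case False
  have k: "m - j = int (nat (m - j))" using assms by simp
  have "(\<Sum>s\<in>{0..m - j - 1}. theta l p (- m + r + s)) = Tf l p (- m + r + (m - j)) - Tf l p (- m + r)"
    using sum2[OF assms(1), where k="nat (m - j)" and p=p and u="- m + r"] k by simp
  then show ?thesis unfolding alpha0_def using assms False by simp
qed

lemma Tf_mult:
  assumes "1 \<le> l"
  shows "Tf l p (z * int l + 1) = - p 0 * of_int z"
  unfolding Tf_def using assms by simp


definition phi :: "(nat \<Rightarrow> rat) \<Rightarrow> nat \<times> int \<Rightarrow> rat" where
  "phi p kc = eshift p (fst kc) + p 0 * of_int (snd kc)"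

definition C1 :: "nat \<Rightarrow> int \<Rightarrow> int set" where
  "C1 l b = {- (b div int l) .. (if b mod int l = 0 then -1 else 0)}"

definition C2 :: "nat \<Rightarrow> int \<Rightarrow> int set" where
  "C2 l a = {(if (-a-1) mod int l = 0 then 0 else 1) .. - ((-a-1) div int l) - 1}"

definition FS :: "nat \<Rightarrow> int \<Rightarrow> (nat \<times> int) set" where
  "FS l b = (\<lambda>c. (nat (b mod int l), c)) ` C1 l b"

definition GS :: "nat \<Rightarrow> int \<Rightarrow> (nat \<times> int) set" where
  "GS l a = (\<lambda>c. (nat ((-a-1) mod int l), c)) ` C2 l a"

lemma ml1: "0 < (L::int) \<Longrightarrow> x*L \<le> y*L \<longleftrightarrow> x \<le> y" by simp
lemma ml2: "0 < (L::int) \<Longrightarrow> x*L < y*L \<longleftrightarrow> x < y" by simp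

lemma J1_eq:
  assumes l: "1 \<le> l" and a: "0 \<le> a" and b: "0 \<le> b"
  shows "{j\<in>{1..a+b+1}. j mod int l = (b + 1 - 1) mod int l} \<inter> {j. j < b + 1}
         = (\<lambda>c. b mod int l - c * int l) ` C1 l b"
proof -
  define L where "L = int l"
  define Q where "Q = b div L"
  define \<rho> where "\<rho> = b mod L"
  have L: "0 < L" using l L_def by simp
  have bq: "b = Q * L + \<rho>" unfolding Q_def \<rho>_def by simp
  have rh: "0 \<le> \<rho>" "\<rho> < L" unfolding \<rho>_def using L by auto
  have C1: "C1 l b = {- Q .. (if \<rho> = 0 then -1 else 0)}" unfolding C1_def Q_def \<rho>_def L_def by simp
  show ?thesis
  proof (rule set_eqI)
    fix j
    show "j \<in> {j\<in>{1..a+b+1}. j mod int l = (b + 1 - 1) mod int l} \<inter> {j. j < b + 1}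
          \<longleftrightarrow> j \<in> (\<lambda>c. b mod int l - c * int l) ` C1 l b"
    proof
      assume j: "j \<in> {j\<in>{1..a+b+1}. j mod int l = (b + 1 - 1) mod int l} \<inter> {j. j < b + 1}"
      then have jm: "j mod L = \<rho>" and j1: "1 \<le> j" and jb: "j \<le> b" unfolding L_def \<rho>_def by auto
      define c where "c = (\<rho> - j) div L"
      have "(\<rho> mod L - j mod L) mod L = (\<rho> - j) mod L" by (rule mod_diff_eq)
      moreover have "\<rho> mod L = \<rho>" using rh by simp
      ultimately have m0: "(\<rho> - j) mod L = 0" using jm by simp
      have "(\<rho> - j) div L * L + (\<rho> - j) mod L = \<rho> - j" by (rule div_mult_mod_eq)
      then have jc: "j = \<rho> - c * L" unfolding c_def using m0 by simp
      have "(- c) * L \<le> Q * L" using jc jb bq by (simp add: algebra_simps)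
      then have "- c \<le> Q" using ml1[OF L] by blast
      then have c1: "- Q \<le> c" by linarith
      have c2: "c \<le> (if \<rho> = 0 then -1 else 0)"
      proof (cases "\<rho> = 0")
        case True
        then have "c * L < 0 * L" using jc j1 by simp
        then have "c < 0" using ml2[OF L] by blast
        then show ?thesis using True by simp
      next
        case False
        then have "c * L < 1 * L" using jc j1 rh by (subst mult_1_left) linarith
        then have "c < 1" using ml2[OF L] by blast
        then show ?thesis using False by simp
      qed
      show "j \<in> (\<lambda>c. b mod int l - c * int l) ` C1 l b"
        unfolding C1 using c1 c2 jc unfolding \<rho>_def L_def by auto
    next
      assume "j \<in> (\<lambda>c. b mod int l - c * int l) ` C1 l b"
      then obtain c where c: "- Q \<le> c" "c \<le> (if \<rho> = 0 then -1 else 0)" and jc: "j = \<rho> - c * L"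
        unfolding C1 \<rho>_def L_def by auto
      have e: "\<rho> - c * L = \<rho> + (- c) * L" by simp
      have jm: "j mod L = \<rho>" unfolding jc e mod_mult_self1 using rh by (simp add: mod_pos_pos_trivial)
      have "(- c) * L \<le> Q * L" using c(1) L by (intro mult_right_mono) auto
      then have jb: "j \<le> b" using jc bq by (simp add: algebra_simps)
      have j1: "1 \<le> j"
      proof (cases "\<rho> = 0")
        case True
        then have "c * L \<le> (-1) * L" using c(2) L by (intro mult_right_mono) auto
        then show ?thesis using jc True L by simp
      next
        case False
        then have "c * L \<le> 0 * L" using c(2) L by (intro mult_right_mono) auto
        then show ?thesis using jc False rh by simp
      qed
      show "j \<in> {j\<in>{1..a+b+1}. j mod int l = (b + 1 - 1) mod int l} \<inter> {j. j < b + 1}"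
        using jm jb j1 a unfolding \<rho>_def L_def by auto
    qed
  qed
qed


lemma J2_eq:
  assumes l: "1 \<le> l" and a: "0 \<le> a" and b: "0 \<le> b"
  shows "{j\<in>{1..a+b+1}. j mod int l = (b + 1 - 1) mod int l} \<inter> {j. b + 1 \<le> j}
         = (\<lambda>c. b + (- ((-a-1) div int l) - c) * int l) ` C2 l a"
proof -
  define L where "L = int l"
  define D where "D = (-a-1) div L"
  define K where "K = (-a-1) mod L"
  define P where "P = - D"
  have L: "0 < L" using l L_def by simp
  have e: "D * L + K = -a-1" unfolding D_def K_def by (rule div_mult_mod_eq)
  have "P * L = - (D * L)" unfolding P_def by simp
  then have aD: "a + 1 = P * L - K" using e by linarith
  have K: "0 \<le> K" "K < L" unfolding K_def using L by auto
  have C2: "C2 l a = {(if K = 0 then 0 else 1) .. P - 1}" unfolding C2_def K_def P_def D_def L_def by simp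
  show ?thesis
  proof (rule set_eqI)
    fix j
    show "j \<in> {j\<in>{1..a+b+1}. j mod int l = (b + 1 - 1) mod int l} \<inter> {j. b + 1 \<le> j}
          \<longleftrightarrow> j \<in> (\<lambda>c. b + (- ((-a-1) div int l) - c) * int l) ` C2 l a"
    proof
      assume j: "j \<in> {j\<in>{1..a+b+1}. j mod int l = (b + 1 - 1) mod int l} \<inter> {j. b + 1 \<le> j}"
      then have jm: "j mod L = b mod L" and ja: "j \<le> a + b + 1" and jb: "b + 1 \<le> j" unfolding L_def by auto
      define t where "t = (j - b) div L"
      have "(j mod L - b mod L) mod L = (j - b) mod L" by (rule mod_diff_eq)
      then have m0: "(j - b) mod L = 0" using jm by simp
      have "(j - b) div L * L + (j - b) mod L = j - b" by (rule div_mult_mod_eq)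
      then have jt: "j - b = t * L" unfolding t_def using m0 by simp
      define c where "c = P - t"
      have jc: "j = b + (P - c) * L" using jt unfolding c_def by simp
      have "0 * L < t * L" using jt jb by simp
      then have "0 < t" using ml2[OF L] by blast
      then have c1: "c \<le> P - 1" unfolding c_def by simp
      have ck: "K \<le> c * L" using jt ja aD unfolding c_def by (simp add: algebra_simps)
      have c2: "(if K = 0 then 0 else 1) \<le> c"
      proof (cases "K = 0")
        case True
        then have "0 * L \<le> c * L" using ck by simp
        then have "0 \<le> c" using ml1[OF L] by blast
        then show ?thesis using True by simp
      next
        case False
        then have "0 * L < c * L" using ck K by simp
        then have "0 < c" using ml2[OF L] by blast
        then show ?thesis using False by simp
      qed
      show "j \<in> (\<lambda>c. b + (- ((-a-1) div int l) - c) * int l) ` C2 l a"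
        unfolding C2 using c1 c2 jc unfolding P_def D_def L_def by auto
    next
      assume "j \<in> (\<lambda>c. b + (- ((-a-1) div int l) - c) * int l) ` C2 l a"
      then obtain c where c: "(if K = 0 then 0 else 1) \<le> c" "c \<le> P - 1" and jc: "j = b + (P - c) * L"
        unfolding C2 P_def D_def L_def by auto
      have jm: "j mod L = b mod L" unfolding jc mod_mult_self1 by simp
      have "1 * L \<le> (P - c) * L" using c(2) L by (intro mult_right_mono) auto
      then have jb: "b + 1 \<le> j" using jc L by linarith
      have ck: "K \<le> c * L"
      proof (cases "K = 0")
        case True
        then have "0 * L \<le> c * L" using c(1) L by (intro mult_right_mono) auto
        then show ?thesis using True by simp
      next
        case False
        then have "1 * L \<le> c * L" using c(1) L by (intro mult_right_mono) auto
        then show ?thesis using K by linarith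
      qed
      have ja: "j \<le> a + b + 1" using jc ck aD by (simp add: algebra_simps)
      show "j \<in> {j\<in>{1..a+b+1}. j mod int l = (b + 1 - 1) mod int l} \<inter> {j. b + 1 \<le> j}"
        using jm jb ja b unfolding L_def by auto
    qed
  qed
qed


lemma mset_img_param:
  assumes inj: "inj_on e C" and fin: "finite C" and J: "J = e ` C"
    and v: "\<And>c. c \<in> C \<Longrightarrow> f (e c) = phi p (k, c)"
  shows "image_mset f (mset_set J) = image_mset (phi p) (mset_set ((\<lambda>c. (k, c)) ` C))"
proof -
  have "mset_set J = image_mset e (mset_set C)" unfolding J using image_mset_mset_set[OF inj] by simp
  then have "image_mset f (mset_set J) = image_mset (f \<circ> e) (mset_set C)" by (simp add: multiset.map_comp)
  also have "\<dots> = image_mset (phi p \<circ> (\<lambda>c. (k, c))) (mset_set C)"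
    by (rule image_mset_cong) (use v fin in auto)
  also have "\<dots> = image_mset (phi p) (image_mset (\<lambda>c. (k, c)) (mset_set C))" by (simp add: multiset.map_comp)
  also have "image_mset (\<lambda>c. (k, c)) (mset_set C) = mset_set ((\<lambda>c. (k, c)) ` C)"
    by (rule image_mset_mset_set) (auto simp: inj_on_def)
  finally show ?thesis .
qed

lemma hook_mset:
  assumes l: "1 \<le> l" and a: "0 \<le> a" and b: "0 \<le> b"
  shows "image_mset (alpha0 l p (b+1) (a+b+1)) (mset_set {j\<in>{1..a+b+1}. j mod int l = (b + 1 - 1) mod int l})
     = image_mset (phi p) (mset_set (GS l a) + mset_set (FS l b))"
proof -
  define L where "L = int l"
  have L: "0 < L" using l L_def by simp
  define J where "J = {j\<in>{1..a+b+1}. j mod int l = (b + 1 - 1) mod int l}"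
  define J1 where "J1 = J \<inter> {j. j < b + 1}"
  define J2 where "J2 = J \<inter> {j. b + 1 \<le> j}"
  have JJ: "J = J1 \<union> J2" "J1 \<inter> J2 = {}" unfolding J1_def J2_def by auto
  have fJ0: "finite J" unfolding J_def by (rule finite_subset[of _ "{1..a+b+1}"]) auto
  have fJ: "finite J1" "finite J2" unfolding J1_def J2_def using fJ0 by auto
  have mJ: "mset_set J = mset_set J1 + mset_set J2" using JJ fJ by (simp add: mset_set_Union)
  define Q where "Q = b div L"
  define \<rho> where "\<rho> = b mod L"
  have bq: "b = Q * L + \<rho>" unfolding Q_def \<rho>_def by simp
  have rh: "0 \<le> \<rho>" unfolding \<rho>_def using L by auto
  have P1: "image_mset (alpha0 l p (b+1) (a+b+1)) (mset_set J1) = image_mset (phi p) (mset_set (FS l b))"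
    unfolding FS_def
  proof (rule mset_img_param[where e = "\<lambda>c. b mod int l - c * int l"])
    show "inj_on (\<lambda>c. b mod int l - c * int l) (C1 l b)" using l by (auto simp: inj_on_def)
    show "finite (C1 l b)" unfolding C1_def by simp
    show "J1 = (\<lambda>c. b mod int l - c * int l) ` C1 l b" unfolding J1_def J_def by (rule J1_eq[OF l a b])
    fix c assume c: "c \<in> C1 l b"
    then have "b mod int l - c * int l \<in> J1" unfolding J1_def J_def using J1_eq[OF l a b] by blast
    then have j: "1 \<le> b mod int l - c * int l" "b mod int l - c * int l < b + 1" unfolding J1_def J_def by auto
    have T1: "Tf l p (b + 1) = - p 0 * of_int Q + eshift p (nat \<rho>)" unfolding Tf_def Q_def \<rho>_def L_def by simp
    have e: "b + 1 - (b mod int l - c * int l) = (Q + c) * int l + 1" using bq unfolding \<rho>_def L_def by (simp add: algebra_simps)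
    have T2: "Tf l p (b + 1 - (b mod int l - c * int l)) = - p 0 * of_int (Q + c)" unfolding e by (rule Tf_mult[OF l])
    have A: "alpha0 l p (b + 1) (a + b + 1) (b mod int l - c * int l) = Tf l p (b + 1) - Tf l p (b + 1 - (b mod int l - c * int l))"
      by (rule alpha0_1[OF l j])
    show "alpha0 l p (b + 1) (a + b + 1) (b mod int l - c * int l) = phi p (nat (b mod int l), c)"
      unfolding A T1 T2 phi_def \<rho>_def L_def by (simp add: algebra_simps)
  qed
  define D where "D = (-a-1) div L"
  define K where "K = (-a-1) mod L"
  have P2: "image_mset (alpha0 l p (b+1) (a+b+1)) (mset_set J2) = image_mset (phi p) (mset_set (GS l a))"
    unfolding GS_def
  proof (rule mset_img_param[where e = "\<lambda>c. b + (- ((-a-1) div int l) - c) * int l"])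
    show "inj_on (\<lambda>c. b + (- ((-a-1) div int l) - c) * int l) (C2 l a)" using l by (auto simp: inj_on_def)
    show "finite (C2 l a)" unfolding C2_def by simp
    show "J2 = (\<lambda>c. b + (- ((-a-1) div int l) - c) * int l) ` C2 l a" unfolding J2_def J_def by (rule J2_eq[OF l a b])
    fix c assume c: "c \<in> C2 l a"
    then have "b + (- ((-a-1) div int l) - c) * int l \<in> J2" unfolding J2_def J_def using J2_eq[OF l a b] by blast
    then have j: "b + 1 \<le> b + (- ((-a-1) div int l) - c) * int l" "b + (- ((-a-1) div int l) - c) * int l \<le> a + b + 1"
      unfolding J2_def J_def by auto
    have T1: "Tf l p (b + 1 - (a + b + 1)) = - p 0 * of_int D + eshift p (nat K)"
      unfolding Tf_def D_def K_def L_def by (simp add: algebra_simps)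
    have e: "b + 1 - (b + (- ((-a-1) div int l) - c) * int l) = (c + D) * int l + 1"
      unfolding D_def L_def by (simp add: algebra_simps)
    have T2: "Tf l p (b + 1 - (b + (- ((-a-1) div int l) - c) * int l)) = - p 0 * of_int (c + D)"
      unfolding e by (rule Tf_mult[OF l])
    have "1 \<le> b + 1" using b by simp
    have A: "alpha0 l p (b + 1) (a + b + 1) (b + (- ((-a-1) div int l) - c) * int l) = Tf l p (b + 1 - (a + b + 1)) - Tf l p (b + 1 - (b + (- ((-a-1) div int l) - c) * int l))"
      by (rule alpha0_2[OF l \<open>1 \<le> b + 1\<close> j])
    show "alpha0 l p (b + 1) (a + b + 1) (b + (- ((-a-1) div int l) - c) * int l) = phi p (nat ((-a-1) mod int l), c)"
      unfolding A T1 T2 phi_def K_def L_def by (simp add: algebra_simps)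
  qed
  show ?thesis using mJ P1 P2 unfolding J_def by simp
qed


lemma image_mset_sum': "image_mset f (sum g A) = (\<Sum>x\<in>A. image_mset f (g x))"
  by (induction A rule: infinite_finite_induct) auto

definition PT :: "nat \<Rightarrow> cell set \<Rightarrow> (nat \<times> int) multiset" where
  "PT l mu = (\<Sum>a\<in>Aset mu. mset_set (GS l a)) + (\<Sum>b\<in>Bset mu. mset_set (FS l b))"

lemma frob_b_tr: "frob_b mu i = frob_a (tr mu) i"
  unfolding frob_b_def frob_a_def rowlen_tr by simp

lemma Eig_PT:
  assumes part: "is_partition mu" and l: "1 \<le> l"
  shows "Eig l p mu = image_mset (phi p) (PT l mu)"
proof -
  define I where "I = {1..frob_rank mu}"
  have A: "Aset mu = frob_a mu ` I" "inj_on (frob_a mu) I" using Aset_frob[OF part] unfolding I_def by auto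
  have B: "Bset mu = frob_b mu ` I" "inj_on (frob_b mu) I"
    using Aset_frob[OF tr_partition[OF part]] unfolding I_def Bset_def frob_rank_tr frob_b_tr[abs_def] by auto
  have an: "\<And>i. i \<in> I \<Longrightarrow> 0 \<le> frob_a mu i" using A(1) Aset_nonneg by blast
  have bn: "\<And>i. i \<in> I \<Longrightarrow> 0 \<le> frob_b mu i" using B(1) Aset_nonneg unfolding Bset_def by blast
  have "Eig l p mu = (\<Sum>i\<in>I. image_mset (phi p) (mset_set (GS l (frob_a mu i)) + mset_set (FS l (frob_b mu i))))"
    unfolding Eig_def I_def[symmetric]
  proof (rule sum.cong[OF refl])
    fix i assume i: "i \<in> I"
    have r: "frob_r mu i = frob_b mu i + 1" and m: "frob_m mu i = frob_a mu i + frob_b mu i + 1"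
      unfolding frob_r_def frob_m_def by simp_all
    show "image_mset (alpha l p mu i) (mset_set {j \<in> {1..frob_m mu i}. j mod int l = (frob_r mu i - 1) mod int l})
        = image_mset (phi p) (mset_set (GS l (frob_a mu i)) + mset_set (FS l (frob_b mu i)))"
      unfolding alpha_alpha0 r m by (rule hook_mset[OF l an[OF i] bn[OF i]])
  qed
  also have "\<dots> = image_mset (phi p) ((\<Sum>i\<in>I. mset_set (GS l (frob_a mu i))) + (\<Sum>i\<in>I. mset_set (FS l (frob_b mu i))))"
    by (simp add: image_mset_sum' sum.distrib)
  also have "(\<Sum>i\<in>I. mset_set (GS l (frob_a mu i))) = (\<Sum>a\<in>Aset mu. mset_set (GS l a))"
    unfolding A(1) by (simp add: sum.reindex[OF A(2)])
  also have "(\<Sum>i\<in>I. mset_set (FS l (frob_b mu i))) = (\<Sum>b\<in>Bset mu. mset_set (FS l b))"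
    unfolding B(1) by (simp add: sum.reindex[OF B(2)])
  finally show ?thesis unfolding PT_def .
qed



lemma C2_shift:
  assumes l: "1 \<le> l" and a: "int l \<le> a"
  shows "C2 l a = insert (- ((-a-1) div int l) - 1) (C2 l (a - int l))"
    and "- ((-a-1) div int l) - 1 \<notin> C2 l (a - int l)"
    and "(-(a - int l)-1) mod int l = (-a-1) mod int l"
proof -
  define L where "L = int l"
  have L: "0 < L" using l L_def by simp
  have e: "-(a - L) - 1 = (-a-1) + 1 * L" by simp
  have m: "(-(a - L)-1) mod L = (-a-1) mod L" unfolding e by (rule mod_mult_self1)
  have d0: "((-a-1) + 1 * L) div L = 1 + (-a-1) div L" using L by (intro div_mult_self1) auto
  have d: "(-(a - L)-1) div L = (-a-1) div L + 1" using d0 e by (simp only:)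
  have "(-a-1) div L \<le> (- L - 1) div L" using a L_def l by (intro zdiv_mono1) auto
  also have "(- L - 1) div L = -2"
  proof -
    have "- L - 1 = (L - 1) + (-2) * L" by simp
    moreover have "((L - 1) + (-2) * L) div L = -2 + (L - 1) div L" using L by (subst div_mult_self1) auto
    moreover have "(L - 1) div L = 0" using L by simp
    ultimately show ?thesis by simp
  qed
  finally have P2: "2 \<le> - ((-a-1) div L)" by simp
  show "C2 l a = insert (- ((-a-1) div int l) - 1) (C2 l (a - int l))"
    unfolding C2_def L_def[symmetric] m d using P2 by auto
  show "- ((-a-1) div int l) - 1 \<notin> C2 l (a - int l)"
    unfolding C2_def L_def[symmetric] m d by auto
  show "(-(a - int l)-1) mod int l = (-a-1) mod int l" using m L_def by simp
qed

lemma C1_shift: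
  assumes l: "1 \<le> l" and b: "int l \<le> b"
  shows "C1 l b = insert (- (b div int l)) (C1 l (b - int l))"
    and "- (b div int l) \<notin> C1 l (b - int l)"
    and "(b - int l) mod int l = b mod int l"
proof -
  define L where "L = int l"
  have L: "0 < L" using l L_def by simp
  have e: "b - L = b + (-1) * L" by simp
  have m: "(b - L) mod L = b mod L" unfolding e by (rule mod_mult_self1)
  have d0: "(b + (-1) * L) div L = -1 + b div L" using L by (intro div_mult_self1) auto
  have d: "(b - L) div L = b div L - 1" using d0 e by (simp only:)
  have "L div L \<le> b div L" using b L_def l by (intro zdiv_mono1) auto
  then have Q1: "1 \<le> b div L" using L by simp
  show "C1 l b = insert (- (b div int l)) (C1 l (b - int l))"
    unfolding C1_def L_def[symmetric] m d using Q1 by auto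
  show "- (b div int l) \<notin> C1 l (b - int l)"
    unfolding C1_def L_def[symmetric] m d by auto
  show "(b - int l) mod int l = b mod int l" using m L_def by simp
qed

lemma GS_shift:
  assumes l: "1 \<le> l" and a: "int l \<le> a"
  shows "mset_set (GS l a) = mset_set (GS l (a - int l)) + {# (nat ((-a-1) mod int l), - ((-a-1) div int l) - 1) #}"
proof -
  have "GS l a = insert (nat ((-a-1) mod int l), - ((-a-1) div int l) - 1) (GS l (a - int l))"
    unfolding GS_def C2_shift(1)[OF l a] C2_shift(3)[OF l a] by simp
  moreover have "(nat ((-a-1) mod int l), - ((-a-1) div int l) - 1) \<notin> GS l (a - int l)"
    unfolding GS_def C2_shift(3)[OF l a] using C2_shift(2)[OF l a] by auto
  moreover have "finite (GS l (a - int l))" unfolding GS_def C2_def by simp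
  ultimately show ?thesis by simp
qed

lemma FS_shift:
  assumes l: "1 \<le> l" and b: "int l \<le> b"
  shows "mset_set (FS l b) = mset_set (FS l (b - int l)) + {# (nat (b mod int l), - (b div int l)) #}"
proof -
  have "FS l b = insert (nat (b mod int l), - (b div int l)) (FS l (b - int l))"
    unfolding FS_def C1_shift(1)[OF l b] C1_shift(3)[OF l b] by simp
  moreover have "(nat (b mod int l), - (b div int l)) \<notin> FS l (b - int l)"
    unfolding FS_def C1_shift(3)[OF l b] using C1_shift(2)[OF l b] by auto
  moreover have "finite (FS l (b - int l))" unfolding FS_def C1_def by simp
  ultimately show ?thesis by simp
qed

lemma pair_pts:
  assumes l: "1 \<le> l" and a: "0 \<le> a" and b: "0 \<le> b" and ab: "a + b + 1 = int l"
  shows "mset_set (GS l a) + mset_set (FS l b) = {# (nat b, 0) #}"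
proof -
  define L where "L = int l"
  have L: "0 < L" using l L_def by simp
  have bL: "b < L" using ab a L_def by simp
  have bm: "b mod L = b" "b div L = 0" using b bL by auto
  have e: "-a-1 = b + (-1) * L" using ab L_def by simp
  have am: "(-a-1) mod L = b" unfolding e mod_mult_self1 using bm by simp
  have d0: "(b + (-1) * L) div L = -1 + b div L" using L by (intro div_mult_self1) auto
  have ad: "(-a-1) div L = -1" using d0 e bm by (simp only:)
  show ?thesis
  proof (cases "b = 0")
    case True
    have "GS l a = {(nat b, 0)}" unfolding GS_def C2_def L_def[symmetric] am ad using True by auto
    moreover have "FS l b = {}" unfolding FS_def C1_def L_def[symmetric] bm using True by auto
    ultimately show ?thesis by simp
  next
    case False
    have "GS l a = {}" unfolding GS_def C2_def L_def[symmetric] am ad using False by auto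
    moreover have "FS l b = {(nat b, 0)}" unfolding FS_def C1_def L_def[symmetric] bm using False by auto
    ultimately show ?thesis by simp
  qed
qed


lemma card_rm:
  assumes "finite A" "x \<in> A"
  shows "card {a\<in>A - {x}. f a = k} + (if f x = k then 1 else 0) = card {a\<in>A. f a = k}"
proof (cases "f x = k")
  case True
  have "{a\<in>A - {x}. f a = k} = {a\<in>A. f a = k} - {x}" by auto
  moreover have "x \<in> {a\<in>A. f a = k}" using True assms by auto
  moreover have "finite {a\<in>A. f a = k}" using assms by auto
  ultimately show ?thesis using True card_Suc_Diff1[of "{a\<in>A. f a = k}" x] by simp
next
  case False
  then have "{a\<in>A - {x}. f a = k} = {a\<in>A. f a = k}" by auto
  then show ?thesis using False by simp
qed

lemma card_swap:
  assumes "finite A" "x \<in> A" "y \<notin> A" "f y = f x"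
  shows "card {a\<in>insert y (A - {x}). f a = k} = card {a\<in>A. f a = k}"
proof -
  define g where "g a = (if a = x then y else a)" for a
  have inj: "inj_on g {a\<in>A. f a = k}" unfolding g_def inj_on_def using assms by auto
  have "g ` {a\<in>A. f a = k} = {a\<in>insert y (A - {x}). f a = k}"
    unfolding g_def using assms by (auto simp: image_iff)
  then show ?thesis using card_image[OF inj] by simp
qed

definition balanced :: "nat \<Rightarrow> cell set \<Rightarrow> bool" where
  "balanced l mu \<longleftrightarrow> (\<forall>k::int. card {a\<in>Aset mu. (-a-1) mod int l = k} = card {b\<in>Bset mu. b mod int l = k})"

lemma Bset_finite: "is_partition mu \<Longrightarrow> finite (Bset mu)"
  unfolding Bset_def using Aset_finite tr_partition by blast

lemma sum_swap:
  assumes "finite A" "x \<in> A" "y \<notin> A"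
  shows "(\<Sum>a\<in>A. g a) = g x + (\<Sum>a\<in>A - {x}. g a)"
    and "(\<Sum>a\<in>insert y (A - {x}). g a) = g y + (\<Sum>a\<in>A - {x}. g a)"
  using assms by (simp_all add: sum.remove)

lemma PT_hook:
  assumes part: "is_partition mu" and hk: "is_rim_hook l mu R" and l: "1 \<le> l"
  shows "\<exists>pt. PT l mu = PT l (mu - R) + {#pt#}"
    and "balanced l mu \<longleftrightarrow> balanced l (mu - R)"
proof -
  have p': "is_partition (mu - R)" using hk unfolding is_rim_hook_def by auto
  have fA: "finite (Aset mu)" and fB: "finite (Bset mu)" using Aset_finite[OF part] Bset_finite[OF part] by auto
  obtain x0 where H: "(int l \<le> x0 \<and> x0 \<in> Aset mu \<and> x0 - int l \<notin> Aset mu \<and>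
               Aset (mu - R) = (Aset mu - {x0}) \<union> {x0 - int l} \<and> Bset (mu - R) = Bset mu)
          \<or> (int l \<le> int l - 1 - x0 \<and> int l - 1 - x0 \<in> Bset mu \<and> int l - 1 - x0 - int l \<notin> Bset mu \<and>
               Bset (mu - R) = (Bset mu - {int l - 1 - x0}) \<union> {int l - 1 - x0 - int l} \<and> Aset (mu - R) = Aset mu)
          \<or> (0 \<le> x0 \<and> 0 \<le> int l - 1 - x0 \<and> x0 \<in> Aset mu \<and> int l - 1 - x0 \<in> Bset mu \<and>
               Aset (mu - R) = Aset mu - {x0} \<and> Bset (mu - R) = Bset mu - {int l - 1 - x0})"
    using hook_AB[OF part hk l] by blast
  define y0 where "y0 = int l - 1 - x0"
  have "(\<exists>pt. PT l mu = PT l (mu - R) + {#pt#}) \<and> (balanced l mu \<longleftrightarrow> balanced l (mu - R))"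
  proof -
    consider (A) "int l \<le> x0" "x0 \<in> Aset mu" "x0 - int l \<notin> Aset mu"
               "Aset (mu - R) = insert (x0 - int l) (Aset mu - {x0})" "Bset (mu - R) = Bset mu"
      | (B) "int l \<le> y0" "y0 \<in> Bset mu" "y0 - int l \<notin> Bset mu"
               "Bset (mu - R) = insert (y0 - int l) (Bset mu - {y0})" "Aset (mu - R) = Aset mu"
      | (C) "0 \<le> x0" "0 \<le> y0" "x0 \<in> Aset mu" "y0 \<in> Bset mu"
               "Aset (mu - R) = Aset mu - {x0}" "Bset (mu - R) = Bset mu - {y0}"
      using H unfolding y0_def by auto
    then show ?thesis
    proof cases
      case A
      have "PT l mu = PT l (mu - R) + {# (nat ((-x0-1) mod int l), - ((-x0-1) div int l) - 1) #}"
        unfolding PT_def A(4,5) sum_swap[OF fA A(2,3)] GS_shift[OF l A(1)] by (simp add: algebra_simps)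
      moreover have "balanced l mu \<longleftrightarrow> balanced l (mu - R)"
        unfolding balanced_def A(4,5) card_swap[OF fA A(2,3) C2_shift(3)[OF l A(1)]] ..
      ultimately show ?thesis by blast
    next
      case B
      have "PT l mu = PT l (mu - R) + {# (nat (y0 mod int l), - (y0 div int l)) #}"
        unfolding PT_def B(4,5) sum_swap[OF fB B(2,3)] FS_shift[OF l B(1)] by (simp add: algebra_simps)
      moreover have "balanced l mu \<longleftrightarrow> balanced l (mu - R)"
        unfolding balanced_def B(4,5) card_swap[OF fB B(2,3) C1_shift(3)[OF l B(1)]] ..
      ultimately show ?thesis by blast
    next
      case C
      have xy: "x0 + y0 + 1 = int l" unfolding y0_def by simp
      have "PT l mu = PT l (mu - R) + (mset_set (GS l x0) + mset_set (FS l y0))"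
        unfolding PT_def C(5,6) sum.remove[OF fA C(3)] sum.remove[OF fB C(4)] by (simp add: algebra_simps)
      then have "PT l mu = PT l (mu - R) + {# (nat y0, 0) #}" using pair_pts[OF l C(1,2) xy] by simp
      moreover have "balanced l mu \<longleftrightarrow> balanced l (mu - R)"
      proof -
        have cls: "(-x0-1) mod int l = y0 mod int l"
        proof -
          have "-x0-1 = y0 + (-1) * int l" unfolding y0_def by simp
          then show ?thesis by (simp only: mod_mult_self1)
        qed
        have ra: "\<And>k. card {a\<in>Aset mu - {x0}. (-a-1) mod int l = k} + (if (-x0-1) mod int l = k then 1 else 0) = card {a\<in>Aset mu. (-a-1) mod int l = k}"
          by (rule card_rm[OF fA C(3)])
        have rb: "\<And>k. card {b\<in>Bset mu - {y0}. b mod int l = k} + (if y0 mod int l = k then 1 else 0) = card {b\<in>Bset mu. b mod int l = k}"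
          by (rule card_rm[OF fB C(4)])
        show ?thesis unfolding balanced_def C(5,6)
        proof (intro iffI allI)
          fix k assume h: "\<forall>k. card {a \<in> Aset mu. (- a - 1) mod int l = k} = card {b \<in> Bset mu. b mod int l = k}"
          show "card {a \<in> Aset mu - {x0}. (- a - 1) mod int l = k} = card {b \<in> Bset mu - {y0}. b mod int l = k}"
            using h[rule_format, of k] ra[of k] rb[of k] cls by (auto split: if_splits)
        next
          fix k assume h: "\<forall>k. card {a \<in> Aset mu - {x0}. (- a - 1) mod int l = k} = card {b \<in> Bset mu - {y0}. b mod int l = k}"
          show "card {a \<in> Aset mu. (- a - 1) mod int l = k} = card {b \<in> Bset mu. b mod int l = k}"
            using h[rule_format, of k] ra[of k] rb[of k] cls by (auto split: if_splits)
        qed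
      qed
      ultimately show ?thesis by blast
    qed
  qed
  then show "\<exists>pt. PT l mu = PT l (mu - R) + {#pt#}" and "balanced l mu \<longleftrightarrow> balanced l (mu - R)" by auto
qed

lemma empty_core_balanced:
  assumes "empty_core l mu" "1 \<le> l"
  shows "is_partition mu \<Longrightarrow> balanced l mu"
  using assms(1)
proof (induction rule: empty_core.induct)
  case empty
  have "Aset {} = {}" unfolding Aset_def xf_def rowlen_def by auto
  moreover have "Bset {} = {}" unfolding Bset_def tr_def Aset_def xf_def rowlen_def by auto
  ultimately show ?case unfolding balanced_def by simp
next
  case (step mu R)
  have p': "is_partition (mu - R)" using step.hyps(1) unfolding is_rim_hook_def by auto
  then show ?case using step PT_hook(2)[OF step.prems step.hyps(1) assms(2)] by blast
qed



definition diag :: "cell \<Rightarrow> int" where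
  "diag x = int (snd x) - int (fst x)"

definition cellc :: "int \<Rightarrow> nat \<Rightarrow> cell" where
  "cellc c t = (if 0 \<le> c then (t, t + nat c) else (t + nat (-c), t))"

definition dpart :: "(int \<Rightarrow> nat) \<Rightarrow> cell set" where
  "dpart d = {x. 1 \<le> fst x \<and> 1 \<le> snd x \<and> min (fst x) (snd x) \<le> d (diag x)}"

lemma diag_cellc[simp]: "diag (cellc c t) = c"
  unfolding diag_def cellc_def by auto

lemma min_cellc[simp]: "min (fst (cellc c t)) (snd (cellc c t)) = t"
  unfolding cellc_def by auto

lemma cellc_ge1: "1 \<le> t \<Longrightarrow> 1 \<le> fst (cellc c t) \<and> 1 \<le> snd (cellc c t)"
  unfolding cellc_def by auto

lemma cellc_inv: "cellc (diag x) (min (fst x) (snd x)) = x"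
  unfolding cellc_def diag_def by (cases x) auto

lemma cellc_inj: "inj_on (cellc c) A"
  unfolding inj_on_def by (metis min_cellc)

lemma diag_set_dpart: "{x\<in>dpart d. diag x = c} = cellc c ` {1..d c}"
proof (rule set_eqI)
  fix x
  show "x \<in> {x\<in>dpart d. diag x = c} \<longleftrightarrow> x \<in> cellc c ` {1..d c}"
  proof
    assume "x \<in> {x\<in>dpart d. diag x = c}"
    then have h: "1 \<le> fst x" "1 \<le> snd x" "min (fst x) (snd x) \<le> d c" "diag x = c" unfolding dpart_def by auto
    then have "x = cellc c (min (fst x) (snd x))" using cellc_inv[of x] by simp
    moreover have "min (fst x) (snd x) \<in> {1..d c}" using h by auto
    ultimately show "x \<in> cellc c ` {1..d c}" by blast
  next
    assume "x \<in> cellc c ` {1..d c}"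
    then obtain t where "t \<in> {1..d c}" "x = cellc c t" by auto
    then show "x \<in> {x\<in>dpart d. diag x = c}" unfolding dpart_def using cellc_ge1[of t c] by auto
  qed
qed

lemma card_diag_dpart: "card {x\<in>dpart d. diag x = c} = d c"
  unfolding diag_set_dpart by (simp add: card_image[OF cellc_inj])

definition valid :: "(int \<Rightarrow> nat) \<Rightarrow> bool" where
  "valid d \<longleftrightarrow> (\<forall>c\<ge>0. d (c+1) \<le> d c \<and> d c \<le> d (c+1) + 1) \<and>
               (\<forall>c\<le>0. d (c-1) \<le> d c \<and> d c \<le> d (c-1) + 1) \<and>
               (\<exists>N. \<forall>c. N \<le> \<bar>c\<bar> \<longrightarrow> d c = 0)"

lemma valid_le0:
  assumes "valid d" shows "d c \<le> d 0"
proof -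
  have pos: "\<And>n::nat. d (int n) \<le> d 0"
  proof -
    fix n :: nat show "d (int n) \<le> d 0"
    proof (induction n)
      case 0 then show ?case by simp
    next
      case (Suc n)
      have "d (int n + 1) \<le> d (int n)" using assms unfolding valid_def by auto
      then show ?case using Suc by (simp add: add.commute)
    qed
  qed
  have neg: "\<And>n::nat. d (- int n) \<le> d 0"
  proof -
    fix n :: nat show "d (- int n) \<le> d 0"
    proof (induction n)
      case 0 then show ?case by simp
    next
      case (Suc n)
      have e: "- int (Suc n) = - int n - 1" by simp
      have "d (- int n - 1) \<le> d (- int n)" using assms unfolding valid_def by auto
      then show ?case using Suc unfolding e by linarith
    qed
  qed
  show ?thesis
  proof (cases "0 \<le> c")
    case True then show ?thesis using pos[of "nat c"] by simp
  next
    case False then show ?thesis using neg[of "nat (-c)"] by simp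
  qed
qed

lemma dpart_finite:
  assumes "valid d" shows "finite (dpart d)"
proof -
  obtain N where N: "\<And>c. N \<le> \<bar>c\<bar> \<Longrightarrow> d c = 0" using assms unfolding valid_def by blast
  have "dpart d \<subseteq> (\<lambda>(c,t). cellc c t) ` ({-N..N} \<times> {1..d 0})"
  proof
    fix x assume x: "x \<in> dpart d"
    then have h: "1 \<le> fst x" "1 \<le> snd x" "min (fst x) (snd x) \<le> d (diag x)" unfolding dpart_def by auto
    then have "d (diag x) \<noteq> 0" by linarith
    then have "\<not> N \<le> \<bar>diag x\<bar>" using N[of "diag x"] by auto
    then have "\<bar>diag x\<bar> < N" by linarith
    moreover have "min (fst x) (snd x) \<le> d 0" using h valid_le0[OF assms, of "diag x"] by simp
    ultimately have "(diag x, min (fst x) (snd x)) \<in> {-N..N} \<times> {1..d 0}" using h by auto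
    then have "(\<lambda>(c,t). cellc c t) (diag x, min (fst x) (snd x)) \<in> (\<lambda>(c,t). cellc c t) ` ({-N..N} \<times> {1..d 0})"
      by (rule imageI)
    then show "x \<in> (\<lambda>(c,t). cellc c t) ` ({-N..N} \<times> {1..d 0})" using cellc_inv[of x] by simp
  qed
  then show ?thesis by (rule finite_subset) auto
qed

lemma dpart_step_row:
  assumes v: "valid d" and x: "(i,j) \<in> dpart d" and i: "2 \<le> i"
  shows "(i - 1, j) \<in> dpart d"
proof -
  have h: "1 \<le> j" "min i j \<le> d (int j - int i)" using x unfolding dpart_def diag_def by auto
  define c where "c = int j - int i"
  have dd: "diag (i - 1, j) = c + 1" unfolding diag_def c_def using i by simp
  show ?thesis
  proof (cases "0 \<le> c")
    case True
    then have "i \<le> d c" "d c \<le> d (c+1) + 1" using h v unfolding valid_def c_def by auto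
    then have "min (i - 1) j \<le> d (c + 1)" by linarith
    then show ?thesis unfolding dpart_def using dd i h by auto
  next
    case False
    then have ji: "j < i" unfolding c_def by simp
    then have j1: "j \<le> d c" using h unfolding c_def by simp
    have V2: "\<forall>c\<le>0. d (c - 1) \<le> d c" using v unfolding valid_def by auto
    have "c + 1 \<le> 0" using False by simp
    then have "d (c + 1 - 1) \<le> d (c+1)" using V2 by blast
    then have "j \<le> d c" "d c \<le> d (c+1)" using j1 by auto
    then have "min (i - 1) j \<le> d (c + 1)" by linarith
    then show ?thesis unfolding dpart_def using dd i h by auto
  qed
qed


lemma dpart_step_col:
  assumes v: "valid d" and x: "(i,j) \<in> dpart d" and j: "2 \<le> j"
  shows "(i, j - 1) \<in> dpart d"
proof -
  have h: "1 \<le> i" "min i j \<le> d (int j - int i)" using x unfolding dpart_def diag_def by auto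
  define c where "c = int j - int i"
  have dd: "diag (i, j - 1) = c - 1" unfolding diag_def c_def using j by simp
  show ?thesis
  proof (cases "c \<le> 0")
    case True
    then have "j \<le> d c" "d c \<le> d (c - 1) + 1" using h v unfolding valid_def c_def by auto
    then have "min i (j - 1) \<le> d (c - 1)" by linarith
    then show ?thesis unfolding dpart_def using dd j h by auto
  next
    case False
    then have ij: "i < j" unfolding c_def by simp
    then have i1: "i \<le> d c" using h unfolding c_def by simp
    have V1: "\<forall>c\<ge>0. d (c + 1) \<le> d c" using v unfolding valid_def by auto
    have "0 \<le> c - 1" using False by simp
    then have "d (c - 1 + 1) \<le> d (c - 1)" using V1 by blast
    then have "min i (j - 1) \<le> d (c - 1)" using i1 ij by simp
    then show ?thesis unfolding dpart_def using dd j h by auto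
  qed
qed

lemma dpart_down:
  assumes v: "valid d" and x: "(i,j) \<in> dpart d" and "1 \<le> i'" "i' \<le> i" "1 \<le> j'" "j' \<le> j"
  shows "(i',j') \<in> dpart d"
proof -
  have R: "\<And>n. (i' + n, j) \<in> dpart d \<Longrightarrow> (i', j) \<in> dpart d"
  proof -
    fix n show "(i' + n, j) \<in> dpart d \<Longrightarrow> (i', j) \<in> dpart d"
    proof (induction n)
      case 0 then show ?case by simp
    next
      case (Suc n)
      have "(i' + Suc n - 1, j) \<in> dpart d" using dpart_step_row[OF v Suc.prems] assms(3) by simp
      then show ?case using Suc.IH by simp
    qed
  qed
  have "(i', j) \<in> dpart d" using R[of "i - i'"] x assms(4) by simp
  have C: "\<And>n. (i', j' + n) \<in> dpart d \<Longrightarrow> (i', j') \<in> dpart d"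
  proof -
    fix n show "(i', j' + n) \<in> dpart d \<Longrightarrow> (i', j') \<in> dpart d"
    proof (induction n)
      case 0 then show ?case by simp
    next
      case (Suc n)
      have "(i', j' + Suc n - 1) \<in> dpart d" using dpart_step_col[OF v Suc.prems] assms(5) by simp
      then show ?case using Suc.IH by simp
    qed
  qed
  show ?thesis using C[of "j - j'"] \<open>(i', j) \<in> dpart d\<close> assms(6) by simp
qed

lemma dpart_partition:
  assumes v: "valid d" shows "is_partition (dpart d)"
  unfolding is_partition_def
proof (intro conjI)
  show "finite (dpart d)" by (rule dpart_finite[OF v])
  show "\<forall>(i, j)\<in>dpart d. 1 \<le> i \<and> 1 \<le> j" unfolding dpart_def by auto
  show "\<forall>(i, j)\<in>dpart d. \<forall>i' j'. 1 \<le> i' \<and> i' \<le> i \<and> 1 \<le> j' \<and> j' \<le> j \<longrightarrow> (i', j') \<in> dpart d"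
    using dpart_down[OF v] by blast
qed

lemma part_eq_dpart:
  assumes part: "is_partition lam"
  shows "lam = dpart (\<lambda>c. card {x\<in>lam. diag x = c})"
proof -
  have down: "\<And>i j i' j'. (i,j)\<in>lam \<Longrightarrow> 1\<le>i' \<Longrightarrow> i'\<le>i \<Longrightarrow> 1\<le>j' \<Longrightarrow> j'\<le>j \<Longrightarrow> (i',j')\<in>lam"
    using part unfolding is_partition_def by blast
  have pos: "\<And>x. x \<in> lam \<Longrightarrow> 1 \<le> fst x \<and> 1 \<le> snd x" using part unfolding is_partition_def by auto
  have fin: "finite lam" using part unfolding is_partition_def by auto
  have key: "\<And>c. {t. 1 \<le> t \<and> cellc c t \<in> lam} = {1..card {x\<in>lam. diag x = c}}"
  proof -
    fix c
    define T where "T = {t. 1 \<le> t \<and> cellc c t \<in> lam}"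
    have img: "{x\<in>lam. diag x = c} = cellc c ` T"
    proof (rule set_eqI)
      fix x show "x \<in> {x\<in>lam. diag x = c} \<longleftrightarrow> x \<in> cellc c ` T"
      proof
        assume "x \<in> {x\<in>lam. diag x = c}"
        then have "x \<in> lam" "diag x = c" by auto
        moreover have "1 \<le> min (fst x) (snd x)" using pos[of x] \<open>x \<in> lam\<close> by simp
        ultimately have "min (fst x) (snd x) \<in> T" "x = cellc c (min (fst x) (snd x))"
          unfolding T_def using cellc_inv[of x] by auto
        then show "x \<in> cellc c ` T" by blast
      qed (auto simp: T_def)
    qed
    have fT: "finite T"
    proof -
      have "T \<subseteq> (\<lambda>x. min (fst x) (snd x)) ` lam" unfolding T_def by (force simp: image_iff)
      then show ?thesis using fin finite_subset by blast
    qed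
    have "T = {1..card T}"
    proof (rule init_seg[OF fT])
      show "\<forall>j\<in>T. 1 \<le> j" unfolding T_def by auto
      show "\<forall>j\<in>T. \<forall>j'. 1 \<le> j' \<and> j' \<le> j \<longrightarrow> j' \<in> T"
      proof (intro ballI allI impI)
        fix t t' assume t: "t \<in> T" and t': "1 \<le> t' \<and> t' \<le> t"
        have "cellc c t \<in> lam" using t unfolding T_def by auto
        then have "cellc c t' \<in> lam" unfolding cellc_def using t'
          by (cases "0 \<le> c") (auto intro: down)
        then show "t' \<in> T" using t' unfolding T_def by auto
      qed
    qed
    moreover have "card {x\<in>lam. diag x = c} = card T" unfolding img by (simp add: card_image[OF cellc_inj])
    ultimately show "{t. 1 \<le> t \<and> cellc c t \<in> lam} = {1..card {x\<in>lam. diag x = c}}" unfolding T_def by simp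
  qed
  show ?thesis
  proof (rule set_eqI)
    fix x :: cell
    show "x \<in> lam \<longleftrightarrow> x \<in> dpart (\<lambda>c. card {x\<in>lam. diag x = c})"
    proof
      assume "x \<in> lam"
      then have "1 \<le> fst x" "1 \<le> snd x" "min (fst x) (snd x) \<in> {t. 1 \<le> t \<and> cellc (diag x) t \<in> lam}"
        using pos[of x] cellc_inv[of x] by auto
      then show "x \<in> dpart (\<lambda>c. card {x\<in>lam. diag x = c})" unfolding dpart_def key by auto
    next
      assume "x \<in> dpart (\<lambda>c. card {x\<in>lam. diag x = c})"
      then have "1 \<le> fst x" "1 \<le> snd x" "min (fst x) (snd x) \<in> {1..card {y\<in>lam. diag y = diag x}}"
        unfolding dpart_def by auto
      then have "cellc (diag x) (min (fst x) (snd x)) \<in> lam" unfolding key[symmetric] by auto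
      then show "x \<in> lam" using cellc_inv[of x] by simp
    qed
  qed
qed


lemma count_img_mset_set:
  assumes "finite S"
  shows "count (image_mset f (mset_set S)) y = card {x\<in>S. f x = y}"
proof -
  have "count (image_mset f (mset_set S)) y = (\<Sum>z\<in>f -` {y} \<inter> S. count (mset_set S) z)"
    unfolding count_image_mset using assms by simp
  also have "\<dots> = (\<Sum>z\<in>f -` {y} \<inter> S. 1)" using assms by (intro sum.cong) auto
  also have "\<dots> = card (f -` {y} \<inter> S)" by simp
  also have "f -` {y} \<inter> S = {x\<in>S. f x = y}" by auto
  finally show ?thesis .
qed

lemma count_mset_set_01:
  assumes "finite S"
  shows "count (mset_set S) x = (if x \<in> S then 1 else 0)"
  using assms by simp

lemma sum_ind_card:
  assumes "finite A"
  shows "(\<Sum>a\<in>A. (if P a then 1 else 0) :: nat) = card {a\<in>A. P a}"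
proof -
  have "A \<inter> Collect P = {a\<in>A. P a}" by auto
  then show ?thesis using assms by (simp add: sum.If_cases)
qed

definition ptsMP :: "nat \<Rightarrow> (nat \<Rightarrow> cell set) \<Rightarrow> (nat \<times> int) multiset" where
  "ptsMP l Lam = (\<Sum>k<l. image_mset (\<lambda>x. (k, diag x)) (mset_set (Lam k)))"

lemma count_ptsMP:
  assumes "\<And>k. finite (Lam k)"
  shows "count (ptsMP l Lam) (k, c) = (if k < l then card {x\<in>Lam k. diag x = c} else 0)"
proof -
  have "count (ptsMP l Lam) (k, c) = (\<Sum>k'<l. card {x\<in>Lam k'. (k', diag x) = (k, c)})"
    unfolding ptsMP_def count_sum by (intro sum.cong refl) (simp add: count_img_mset_set[OF assms])
  also have "\<dots> = (\<Sum>k'<l. if k' = k then card {x\<in>Lam k. diag x = c} else 0)"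
    by (intro sum.cong) auto
  also have "\<dots> = (if k < l then card {x\<in>Lam k. diag x = c} else 0)"
    by (simp add: sum.delta)
  finally show ?thesis .
qed

lemma res_ptsMP:
  "(\<Sum>k<l. res (eshift p k) (p 0) (Lam k)) = image_mset (phi p) (ptsMP l Lam)"
  unfolding ptsMP_def image_mset_sum' res_def
  apply (intro sum.cong refl)
  apply (simp add: multiset.map_comp comp_def phi_def diag_def)
  by (rule image_mset_cong) (simp add: split_beta)

lemma count_PT:
  assumes part: "is_partition mu"
  shows "count (PT l mu) kc = card {a\<in>Aset mu. kc \<in> GS l a} + card {b\<in>Bset mu. kc \<in> FS l b}"
proof -
  have fA: "finite (Aset mu)" and fB: "finite (Bset mu)" using Aset_finite[OF part] Bset_finite[OF part] by auto
  have fG: "\<And>a. finite (GS l a)" unfolding GS_def C2_def by simp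
  have fF: "\<And>b. finite (FS l b)" unfolding FS_def C1_def by simp
  show ?thesis unfolding PT_def count_union count_sum count_mset_set_01[OF fG] count_mset_set_01[OF fF]
    using sum_ind_card[OF fA] sum_ind_card[OF fB] by simp
qed

lemma memGS:
  assumes "1 \<le> l"
  shows "(k, c) \<in> GS l a \<longleftrightarrow> int k = (-a-1) mod int l \<and> c \<in> C2 l a"
  unfolding GS_def using assms by auto

lemma memFS:
  assumes "1 \<le> l"
  shows "(k, c) \<in> FS l b \<longleftrightarrow> int k = b mod int l \<and> c \<in> C1 l b"
  unfolding FS_def using assms by auto

lemma card_eq_le1:
  assumes "finite S" "inj_on f S"
  shows "card {x\<in>S. f x = v} \<le> 1"
proof (cases "{x\<in>S. f x = v} = {}")
  case True then show ?thesis unfolding True by simp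
next
  case False
  then obtain x where x: "x \<in> S" "f x = v" by auto
  then have "{x\<in>S. f x = v} = {x}" using assms(2) unfolding inj_on_def by auto
  then show ?thesis by simp
qed

lemma gen_step:
  fixes f :: "'a \<Rightarrow> int"
  assumes "finite S" "inj_on f S"
  shows "card {x\<in>S. v + 1 \<le> f x} \<le> card {x\<in>S. v \<le> f x}"
    and "card {x\<in>S. v \<le> f x} \<le> card {x\<in>S. v + 1 \<le> f x} + 1"
proof -
  show "card {x\<in>S. v + 1 \<le> f x} \<le> card {x\<in>S. v \<le> f x}" using assms(1) by (intro card_mono) auto
  have "{x\<in>S. v \<le> f x} \<subseteq> {x\<in>S. v + 1 \<le> f x} \<union> {x\<in>S. f x = v}" by auto
  then have "card {x\<in>S. v \<le> f x} \<le> card ({x\<in>S. v + 1 \<le> f x} \<union> {x\<in>S. f x = v})"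
    using assms(1) by (intro card_mono) auto
  also have "\<dots> \<le> card {x\<in>S. v + 1 \<le> f x} + card {x\<in>S. f x = v}" by (rule card_Un_le)
  finally show "card {x\<in>S. v \<le> f x} \<le> card {x\<in>S. v + 1 \<le> f x} + 1" using card_eq_le1[OF assms, of v] by linarith
qed


lemma P_ge1:
  assumes "1 \<le> l" "0 \<le> a" shows "1 \<le> - ((-a-1) div int l)"
proof -
  have "(-a-1) div int l < 0" using assms by (subst pos_imp_zdiv_neg_iff) auto
  then show ?thesis by simp
qed

lemma Q_ge0:
  assumes "1 \<le> l" "0 \<le> b" shows "0 \<le> b div int l"
  using assms by (simp add: pos_imp_zdiv_nonneg_iff)

lemma D_formula:
  fixes k :: nat and c :: int
  assumes part: "is_partition mu" and l: "1 \<le> l" and bal: "balanced l mu"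
  defines "M \<equiv> {a\<in>Aset mu. (-a-1) mod int l = int k}"
      and "N \<equiv> {b\<in>Bset mu. b mod int l = int k}"
  shows "count (PT l mu) (k, c) = (if 0 \<le> c then card {a\<in>M. c + 1 \<le> - ((-a-1) div int l)}
                                   else card {b\<in>N. - c \<le> b div int l})"
    and "card M = card N"
proof -
  show cMN: "card M = card N" using bal unfolding balanced_def M_def N_def by blast
  have An: "\<And>a. a \<in> M \<Longrightarrow> 0 \<le> a" unfolding M_def using Aset_nonneg by auto
  have Bn: "\<And>b. b \<in> N \<Longrightarrow> 0 \<le> b" unfolding N_def Bset_def using Aset_nonneg by auto
  have e1: "{a\<in>Aset mu. (k, c) \<in> GS l a} = {a\<in>M. c \<in> C2 l a}" unfolding M_def memGS[OF l] by auto
  have e2: "{b\<in>Bset mu. (k, c) \<in> FS l b} = {b\<in>N. c \<in> C1 l b}" unfolding N_def memFS[OF l] by auto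
  have C2M: "\<And>a. a \<in> M \<Longrightarrow> C2 l a = {(if int k = 0 then 0 else 1) .. - ((-a-1) div int l) - 1}"
    unfolding M_def C2_def by auto
  have C1N: "\<And>b. b \<in> N \<Longrightarrow> C1 l b = {- (b div int l) .. (if int k = 0 then -1 else 0)}"
    unfolding N_def C1_def by auto
  have cnt: "count (PT l mu) (k, c) = card {a\<in>M. c \<in> C2 l a} + card {b\<in>N. c \<in> C1 l b}"
    using count_PT[OF part] e1 e2 by simp
  show "count (PT l mu) (k, c) = (if 0 \<le> c then card {a\<in>M. c + 1 \<le> - ((-a-1) div int l)}
                                   else card {b\<in>N. - c \<le> b div int l})"
  proof (cases "0 \<le> c")
    case True
    show ?thesis
    proof (cases "c = 0 \<and> int k \<noteq> 0")
      case True2: True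
      have z1: "{a\<in>M. c \<in> C2 l a} = {}" using C2M True2 by auto
      have z2: "{b\<in>N. c \<in> C1 l b} = N" using C1N True2 Q_ge0[OF l] Bn by auto
      have z3: "{a\<in>M. c + 1 \<le> - ((-a-1) div int l)} = M" using True2 P_ge1[OF l] An by auto
      show ?thesis unfolding cnt z1 z2 z3 using True cMN by simp
    next
      case False2: False
      have z1: "{a\<in>M. c \<in> C2 l a} = {a\<in>M. c + 1 \<le> - ((-a-1) div int l)}"
        using C2M False2 True P_ge1[OF l] An by fastforce
      have z2: "{b\<in>N. c \<in> C1 l b} = {}"
      proof -
        have "\<And>b. b \<in> N \<Longrightarrow> c \<notin> C1 l b" using C1N False2 True by (auto split: if_splits)
        then show ?thesis by auto
      qed
      show ?thesis unfolding cnt z1 z2 using True by simp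
    qed
  next
    case False
    have z1: "{a\<in>M. c \<in> C2 l a} = {}" using C2M False by auto
    have z2: "{b\<in>N. c \<in> C1 l b} = {b\<in>N. - c \<le> b div int l}" using C1N False by fastforce
    show ?thesis unfolding cnt z1 z2 using False by simp
  qed
qed


lemma valid_D:
  fixes k :: nat
  assumes part: "is_partition mu" and l: "1 \<le> l" and bal: "balanced l mu"
  shows "valid (\<lambda>c. count (PT l mu) (k, c))"
proof -
  define M where "M = {a\<in>Aset mu. (-a-1) mod int l = int k}"
  define N where "N = {b\<in>Bset mu. b mod int l = int k}"
  define P where "P a = - ((-a-1) div int l)" for a
  define Q where "Q b = b div int l" for b
  define F where "F v = card {a\<in>M. v \<le> P a}" for v
  define G where "G v = card {b\<in>N. v \<le> Q b}" for v
  have fM: "finite M" unfolding M_def using Aset_finite[OF part] by auto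
  have fN: "finite N" unfolding N_def using Bset_finite[OF part] by auto
  have An: "\<And>a. a \<in> M \<Longrightarrow> 0 \<le> a" unfolding M_def using Aset_nonneg by auto
  have Bn: "\<And>b. b \<in> N \<Longrightarrow> 0 \<le> b" unfolding N_def Bset_def using Aset_nonneg by auto
  have injP: "inj_on P M"
  proof (rule inj_onI)
    fix a a' assume a: "a \<in> M" "a' \<in> M" "P a = P a'"
    have e1: "(-a-1) div int l * int l + (-a-1) mod int l = -a-1" by (rule div_mult_mod_eq)
    have e2: "(-a'-1) div int l * int l + (-a'-1) mod int l = -a'-1" by (rule div_mult_mod_eq)
    have da: "(-a-1) div int l = (-a'-1) div int l" using a(3) unfolding P_def by simp
    have ma: "(-a-1) mod int l = (-a'-1) mod int l" using a(1,2) unfolding M_def by simp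
    have "-a-1 = -a'-1" using e1 e2 da ma by metis
    then show "a = a'" by simp
  qed
  have injQ: "inj_on Q N"
  proof (rule inj_onI)
    fix b b' assume b: "b \<in> N" "b' \<in> N" "Q b = Q b'"
    have e1: "b div int l * int l + b mod int l = b" by (rule div_mult_mod_eq)
    have e2: "b' div int l * int l + b' mod int l = b'" by (rule div_mult_mod_eq)
    have da: "b div int l = b' div int l" using b(3) unfolding Q_def by simp
    have ma: "b mod int l = b' mod int l" using b(1,2) unfolding N_def by simp
    show "b = b'" using e1 e2 da ma by metis
  qed
  have cMN: "card M = card N" using D_formula(2)[OF part l bal] unfolding M_def N_def .
  have DF: "\<And>c. count (PT l mu) (k, c) = (if 0 \<le> c then F (c + 1) else G (- c))"
    using D_formula(1)[OF part l bal] unfolding F_def G_def M_def N_def P_def Q_def by simp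
  have F1: "F 1 = G 0"
  proof -
    have "{a\<in>M. 1 \<le> P a} = M" using P_ge1[OF l] An unfolding P_def by auto
    moreover have "{b\<in>N. 0 \<le> Q b} = N" using Q_ge0[OF l] Bn unfolding Q_def by auto
    ultimately show ?thesis unfolding F_def G_def using cMN by simp
  qed
  have DG: "\<And>c. c \<le> 0 \<Longrightarrow> count (PT l mu) (k, c) = G (- c)"
    using DF F1 by (case_tac "c = 0") auto
  have FS': "\<And>v. F (v + 1) \<le> F v \<and> F v \<le> F (v + 1) + 1"
    unfolding F_def using gen_step[OF fM injP] by blast
  have GS': "\<And>v. G (v + 1) \<le> G v \<and> G v \<le> G (v + 1) + 1"
    unfolding G_def using gen_step[OF fN injQ] by blast
  define Nb where "Nb = Max (P ` M \<union> Q ` N \<union> {0}) + 1"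
  have PB: "\<And>a. a \<in> M \<Longrightarrow> P a < Nb" unfolding Nb_def using fM fN
    by (metis (no_types, lifting) Max_ge UnCI finite_Un finite_imageI finite_insert imageI insert_is_Un zle_add1_eq_le not_le)
  have QB: "\<And>b. b \<in> N \<Longrightarrow> Q b < Nb" unfolding Nb_def using fM fN
    by (metis (no_types, lifting) Max_ge UnCI finite_Un finite_imageI finite_insert imageI insert_is_Un zle_add1_eq_le not_le)
  show ?thesis unfolding valid_def
  proof (intro conjI allI impI)
    fix c :: int assume c: "0 \<le> c"
    show "count (PT l mu) (k, c + 1) \<le> count (PT l mu) (k, c)"
      using DF[of c] DF[of "c+1"] c FS'[of "c+1"] by simp
    show "count (PT l mu) (k, c) \<le> count (PT l mu) (k, c + 1) + 1"
      using DF[of c] DF[of "c+1"] c FS'[of "c+1"] by simp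
  next
    fix c :: int assume c: "c \<le> 0"
    show "count (PT l mu) (k, c - 1) \<le> count (PT l mu) (k, c)"
      using DG[of c] DG[of "c - 1"] c GS'[of "- c"] by (simp add: algebra_simps)
    show "count (PT l mu) (k, c) \<le> count (PT l mu) (k, c - 1) + 1"
      using DG[of c] DG[of "c - 1"] c GS'[of "- c"] by (simp add: algebra_simps)
  next
    show "\<exists>N. \<forall>c. N \<le> \<bar>c\<bar> \<longrightarrow> count (PT l mu) (k, c) = 0"
    proof (intro exI allI impI)
      fix c assume c: "Nb \<le> \<bar>c\<bar>"
      show "count (PT l mu) (k, c) = 0"
      proof (cases "0 \<le> c")
        case True
        have z: "{a\<in>M. c + 1 \<le> P a} = {}" using PB c True by fastforce
        show ?thesis using DF[of c] True unfolding F_def z by simp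
      next
        case False
        have z: "{b\<in>N. - c \<le> Q b} = {}" using QB c False by fastforce
        show ?thesis using DF[of c] False unfolding G_def z by simp
      qed
    qed
  qed
qed

definition LamOf :: "nat \<Rightarrow> cell set \<Rightarrow> nat \<Rightarrow> cell set" where
  "LamOf l mu k = (if k < l then dpart (\<lambda>c. count (PT l mu) (k, c)) else {})"

lemma PT_k_lt:
  assumes part: "is_partition mu" and l: "1 \<le> l" and "k \<ge> l"
  shows "count (PT l mu) (k, c) = 0"
proof -
  have mb: "\<And>x. x mod int l < int l" using l by simp
  have "\<And>a. (k, c) \<notin> GS l a"
  proof -
    fix a show "(k, c) \<notin> GS l a" unfolding memGS[OF l] using assms(3) mb[of "-a-1"] by auto
  qed
  moreover have "\<And>b. (k, c) \<notin> FS l b"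
  proof -
    fix b show "(k, c) \<notin> FS l b" unfolding memFS[OF l] using assms(3) mb[of b] by auto
  qed
  ultimately show ?thesis unfolding count_PT[OF part] by simp
qed

lemma LamOf_props:
  assumes part: "is_partition mu" and l: "1 \<le> l" and bal: "balanced l mu"
  shows "is_multipartition l (LamOf l mu)" and "ptsMP l (LamOf l mu) = PT l mu"
proof -
  have v: "\<And>k. valid (\<lambda>c. count (PT l mu) (k, c))" using valid_D[OF part l bal] by blast
  show "is_multipartition l (LamOf l mu)"
    unfolding is_multipartition_def LamOf_def using dpart_partition[OF v] by auto
  have fin: "\<And>k. finite (LamOf l mu k)" unfolding LamOf_def using dpart_finite[OF v] by auto
  show "ptsMP l (LamOf l mu) = PT l mu"
  proof (rule multiset_eqI)
    fix x :: "nat \<times> int"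
    obtain k c where x: "x = (k, c)" by (cases x)
    show "count (ptsMP l (LamOf l mu)) x = count (PT l mu) x"
      unfolding x count_ptsMP[OF fin] using PT_k_lt[OF part l] card_diag_dpart
      by (auto simp: LamOf_def)
  qed
qed



lemma mp_finite: "is_multipartition l L \<Longrightarrow> finite (L k)"
  unfolding is_multipartition_def is_partition_def by (cases "k < l") auto

lemma mp_unique:
  assumes m1: "is_multipartition l L1" and m2: "is_multipartition l L2"
    and e: "ptsMP l L1 = ptsMP l L2"
  shows "L1 = L2"
proof (rule ext)
  fix k
  show "L1 k = L2 k"
  proof (cases "k < l")
    case True
    have c: "\<And>c. card {x\<in>L1 k. diag x = c} = card {x\<in>L2 k. diag x = c}"
    proof -
      fix c
      have "count (ptsMP l L1) (k,c) = count (ptsMP l L2) (k,c)" using e by simp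
      then show "card {x\<in>L1 k. diag x = c} = card {x\<in>L2 k. diag x = c}"
        unfolding count_ptsMP[OF mp_finite[OF m1]] count_ptsMP[OF mp_finite[OF m2]] using True by simp
    qed
    have p1: "is_partition (L1 k)" and p2: "is_partition (L2 k)" using m1 m2 True unfolding is_multipartition_def by auto
    show ?thesis using part_eq_dpart[OF p1] part_eq_dpart[OF p2] c by simp
  next
    case False
    then show ?thesis using m1 m2 unfolding is_multipartition_def by auto
  qed
qed

lemma part_diag_bound:
  assumes part: "is_partition lam" and x: "x \<in> lam"
  shows "\<bar>diag x\<bar> < int (card lam)"
proof -
  obtain i j where xij: "x = (i,j)" by (cases x)
  have ij: "1 \<le> i" "1 \<le> j" using part x xij unfolding is_partition_def by auto
  have fin: "finite lam" using part unfolding is_partition_def by auto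
  have down: "\<And>i j i' j'. (i,j)\<in>lam \<Longrightarrow> 1\<le>i' \<Longrightarrow> i'\<le>i \<Longrightarrow> 1\<le>j' \<Longrightarrow> j'\<le>j \<Longrightarrow> (i',j')\<in>lam"
    using part unfolding is_partition_def by blast
  have xl: "(i,j) \<in> lam" using x xij by simp
  have "(\<lambda>j'. (i, j')) ` {1..j} \<subseteq> lam" using down[OF xl] ij by auto
  then have "card ((\<lambda>j'. (i, j')) ` {1..j}) \<le> card lam" using fin by (intro card_mono) auto
  then have cj: "j \<le> card lam" by (simp add: card_image inj_on_def)
  have "(\<lambda>i'. (i', j)) ` {1..i} \<subseteq> lam" using down[OF xl] ij by auto
  then have "card ((\<lambda>i'. (i', j)) ` {1..i}) \<le> card lam" using fin by (intro card_mono) auto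
  then have ci: "i \<le> card lam" by (simp add: card_image inj_on_def)
  show ?thesis unfolding xij diag_def using ij ci cj by simp
qed

definition Bd :: "nat \<Rightarrow> int \<Rightarrow> (nat \<times> int) set" where
  "Bd l n = {x. fst x < l \<and> \<bar>snd x\<bar> \<le> n}"

lemma size_ptsMP: "size (ptsMP l Lam) = (\<Sum>k<l. card (Lam k))"
  unfolding ptsMP_def by simp

lemma ptsMP_bound:
  assumes m: "is_multipartition l Lam" and n: "int (size (ptsMP l Lam)) \<le> n"
  shows "set_mset (ptsMP l Lam) \<subseteq> Bd l n"
proof
  fix y assume "y \<in># ptsMP l Lam"
  then obtain k where k: "k < l" "y \<in># image_mset (\<lambda>x. (k, diag x)) (mset_set (Lam k))"
    unfolding ptsMP_def set_mset_sum[OF finite_lessThan] by auto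
  then obtain x where x: "x \<in> Lam k" "y = (k, diag x)" using mp_finite[OF m, of k] by auto
  have p: "is_partition (Lam k)" using m k unfolding is_multipartition_def by auto
  have "card (Lam k) \<le> (\<Sum>k<l. card (Lam k))" using k by (intro member_le_sum) auto
  then have "\<bar>diag x\<bar> < n" using part_diag_bound[OF p x(1)] n unfolding size_ptsMP by linarith
  then show "y \<in> Bd l n" unfolding Bd_def using x k by auto
qed


definition coef :: "nat \<times> int \<Rightarrow> nat \<times> int \<Rightarrow> nat \<Rightarrow> rat" where
  "coef x y i = (if i = 0 then of_int (snd x - snd y) else 0)
       + (if 1 \<le> i \<and> i \<le> fst x then 1 else 0) - (if 1 \<le> i \<and> i \<le> fst y then 1 else 0)"

lemma eshift_sum:
  assumes "k < l"
  shows "eshift p k = (\<Sum>i<l. (if 1 \<le> i \<and> i \<le> k then 1 else 0) * p i)"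
proof -
  have "(\<Sum>i<l. (if 1 \<le> i \<and> i \<le> k then 1 else 0) * p i) = (\<Sum>i<l. if 1 \<le> i \<and> i \<le> k then p i else 0)"
    by (intro sum.cong) auto
  also have "\<dots> = (\<Sum>i\<in>{i\<in>{..<l}. 1 \<le> i \<and> i \<le> k}. p i)" by (rule sum.inter_filter[symmetric]) simp
  also have "{i\<in>{..<l}. 1 \<le> i \<and> i \<le> k} = {1..k}" using assms by auto
  finally show ?thesis unfolding eshift_def by simp
qed

lemma coef_sum:
  assumes "fst x < l" "fst y < l" "1 \<le> l"
  shows "(\<Sum>i<l. coef x y i * p i) = phi p x - phi p y"
proof -
  have "(\<Sum>i<l. coef x y i * p i) = (\<Sum>i<l. (if i = 0 then of_int (snd x - snd y) else 0) * p i)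
        + (\<Sum>i<l. (if 1 \<le> i \<and> i \<le> fst x then 1 else 0) * p i)
        - (\<Sum>i<l. (if 1 \<le> i \<and> i \<le> fst y then 1 else 0) * p i)"
    unfolding coef_def by (simp add: algebra_simps sum.distrib sum_subtractf)
  also have "(\<Sum>i<l. (if i = 0 then of_int (snd x - snd y) else 0) * p i) = (\<Sum>i<l. if i = 0 then of_int (snd x - snd y) * p i else 0)"
    by (intro sum.cong) auto
  also have "\<dots> = of_int (snd x - snd y) * p 0"
    using assms(3) by (subst sum.delta) auto
  finally show ?thesis unfolding phi_def eshift_sum[OF assms(1)] eshift_sum[OF assms(2)]
    by (simp add: algebra_simps)
qed

lemma coef_nz:
  assumes "x \<noteq> y" "fst x < l" "fst y < l" "1 \<le> l"
  shows "\<exists>i<l. coef x y i \<noteq> 0"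
proof (cases "snd x = snd y")
  case False
  then show ?thesis using assms(4) by (intro exI[of _ 0]) (auto simp: coef_def)
next
  case True
  then have ne: "fst x \<noteq> fst y" using assms(1) by (cases x, cases y) auto
  define i where "i = max (fst x) (fst y)"
  have "1 \<le> i" "i < l" using ne assms(2,3) unfolding i_def by auto
  moreover have "coef x y i \<noteq> 0" unfolding coef_def using ne \<open>1 \<le> i\<close> unfolding i_def by (auto simp: max_def)
  ultimately show ?thesis by blast
qed

definition Zset :: "nat \<Rightarrow> int \<Rightarrow> ((nat \<Rightarrow> rat) \<times> rat) set" where
  "Zset l n = (\<lambda>(x,y). (coef x y, 0)) ` {(x,y). x \<in> Bd l n \<and> y \<in> Bd l n \<and> x \<noteq> y}"

lemma Bd_finite: "finite (Bd l n)"
proof -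
  have "Bd l n \<subseteq> {..<l} \<times> {-n..n}" unfolding Bd_def by auto
  then show ?thesis by (rule finite_subset) auto
qed

lemma Zset_finite: "finite (Zset l n)"
proof -
  have "{(x,y). x \<in> Bd l n \<and> y \<in> Bd l n \<and> x \<noteq> y} \<subseteq> Bd l n \<times> Bd l n" by auto
  then have "finite {(x,y). x \<in> Bd l n \<and> y \<in> Bd l n \<and> x \<noteq> y}" using Bd_finite finite_subset by blast
  then show ?thesis unfolding Zset_def by simp
qed

lemma Zset_nz: "1 \<le> l \<Longrightarrow> \<forall>(c,d)\<in>Zset l n. \<exists>k<l. c k \<noteq> 0"
  unfolding Zset_def Bd_def using coef_nz by auto

lemma inj_generic:
  assumes l: "1 \<le> l" and av: "\<forall>(c,d)\<in>Zset l n. (\<Sum>k<l. c k * p k) \<noteq> d"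
  shows "inj_on (phi p) (Bd l n)"
proof (rule inj_onI)
  fix x y assume x: "x \<in> Bd l n" and y: "y \<in> Bd l n" and e: "phi p x = phi p y"
  show "x = y"
  proof (rule ccontr)
    assume "x \<noteq> y"
    then have "(coef x y, 0) \<in> Zset l n" unfolding Zset_def using x y by force
    then have "(\<Sum>k<l. coef x y k * p k) \<noteq> 0" using av by auto
    moreover have "fst x < l" "fst y < l" using x y unfolding Bd_def by auto
    ultimately show False using coef_sum[of x l y p] l e by simp
  qed
qed

lemma count_image_inj:
  assumes inj: "inj_on f U" and A: "set_mset A \<subseteq> U" and x: "x \<in> U"
  shows "count (image_mset f A) (f x) = count A x"
proof -
  have "f -` {f x} \<inter> set_mset A \<subseteq> {x}" using inj A x unfolding inj_on_def by auto
  then have s: "f -` {f x} \<inter> set_mset A = (if x \<in># A then {x} else {})" by auto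
  show ?thesis unfolding count_image_mset s by (auto simp: not_in_iff)
qed

lemma image_mset_inj_eq:
  assumes inj: "inj_on f U" and A: "set_mset A \<subseteq> U" and B: "set_mset B \<subseteq> U"
    and e: "image_mset f A = image_mset f B"
  shows "A = B"
proof (rule multiset_eqI)
  fix x show "count A x = count B x"
  proof (cases "x \<in> U")
    case True
    then show ?thesis using count_image_inj[OF inj A True] count_image_inj[OF inj B True] e by simp
  next
    case False
    then have "x \<notin># A" "x \<notin># B" using A B by auto
    then show ?thesis by (simp add: not_in_iff)
  qed
qed

lemma Bd_mono: "n \<le> n' \<Longrightarrow> Bd l n \<subseteq> Bd l n'"
  unfolding Bd_def by auto

lemma EigMP_eq:
  assumes part: "is_partition mu" and l: "1 \<le> l" and bal: "balanced l mu"
    and av: "\<forall>(c,d)\<in>Zset l n. (\<Sum>k<l. c k * p k) \<noteq> d"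
    and sz: "int (size (PT l mu)) \<le> n"
  shows "EigMP l p mu = LamOf l mu"
  unfolding EigMP_def
proof (rule the_equality)
  note LP = LamOf_props[OF part l bal]
  show "is_multipartition l (LamOf l mu) \<and> (\<Sum>k<l. res (eshift p k) (p 0) (LamOf l mu k)) = Eig l p mu"
    using LP unfolding res_ptsMP Eig_PT[OF part l] by simp
  fix Lam assume h: "is_multipartition l Lam \<and> (\<Sum>k<l. res (eshift p k) (p 0) (Lam k)) = Eig l p mu"
  then have e: "image_mset (phi p) (ptsMP l Lam) = image_mset (phi p) (ptsMP l (LamOf l mu))"
    unfolding res_ptsMP Eig_PT[OF part l] LP(2) by simp
  then have "size (ptsMP l Lam) = size (PT l mu)" using LP(2) by (metis size_image_mset)
  then have b1: "set_mset (ptsMP l Lam) \<subseteq> Bd l n" using ptsMP_bound[of l Lam n] h sz by simp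
  have b2: "set_mset (ptsMP l (LamOf l mu)) \<subseteq> Bd l n" using ptsMP_bound[OF LP(1), of n] sz LP(2) by simp
  have "ptsMP l Lam = ptsMP l (LamOf l mu)" by (rule image_mset_inj_eq[OF inj_generic[OF l av] b1 b2 e])
  then show "Lam = LamOf l mu" using mp_unique h LP(1) by blast
qed


lemma dpart_remove:
  assumes "\<And>c. d c = d' c + (if c = c0 then 1 else 0)"
  shows "dpart d' = dpart d - {cellc c0 (d c0)}" and "cellc c0 (d c0) \<in> dpart d"
proof -
  have d0: "1 \<le> d c0" using assms[of c0] by simp
  show "cellc c0 (d c0) \<in> dpart d" unfolding dpart_def using cellc_ge1[OF d0, of c0] by simp
  show "dpart d' = dpart d - {cellc c0 (d c0)}"
  proof (rule set_eqI)
    fix y :: cell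
    show "y \<in> dpart d' \<longleftrightarrow> y \<in> dpart d - {cellc c0 (d c0)}"
    proof (cases "diag y = c0")
      case True
      have "y = cellc c0 (min (fst y) (snd y))" using cellc_inv[of y] True by simp
      then have "y = cellc c0 (d c0) \<longleftrightarrow> min (fst y) (snd y) = d c0" by (metis min_cellc)
      then show ?thesis unfolding dpart_def using True assms[of c0] by auto
    next
      case False
      have "y \<noteq> cellc c0 (d c0)" using False by auto
      then show ?thesis unfolding dpart_def using False assms[of "diag y"] by auto
    qed
  qed
qed

lemma LamOf_remove:
  assumes l: "1 \<le> l" and part: "is_partition mu" and part': "is_partition mu'"
    and e: "PT l mu = PT l mu' + {#pt#}"
  shows "\<exists>k<l. \<exists>x\<in>LamOf l mu k. LamOf l mu' = (LamOf l mu)(k := LamOf l mu k - {x})"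
proof -
  obtain k0 c0 where pt: "pt = (k0, c0)" by (cases pt)
  have cnt: "\<And>k c. count (PT l mu) (k, c) = count (PT l mu') (k, c) + (if (k, c) = (k0, c0) then 1 else 0)"
    using e pt by simp
  have k0: "k0 < l"
  proof (rule ccontr)
    assume "\<not> k0 < l"
    then have "count (PT l mu) (k0, c0) = 0" using PT_k_lt[OF part l] by simp
    then show False using cnt[of k0 c0] by simp
  qed
  define x where "x = cellc c0 (count (PT l mu) (k0, c0))"
  have R: "dpart (\<lambda>c. count (PT l mu') (k0, c)) = dpart (\<lambda>c. count (PT l mu) (k0, c)) - {x}"
    "x \<in> dpart (\<lambda>c. count (PT l mu) (k0, c))"
    using dpart_remove[of "\<lambda>c. count (PT l mu) (k0, c)" "\<lambda>c. count (PT l mu') (k0, c)" c0] cnt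
    unfolding x_def by auto
  have "LamOf l mu' = (LamOf l mu)(k0 := LamOf l mu k0 - {x})"
  proof (rule ext)
    fix k
    show "LamOf l mu' k = ((LamOf l mu)(k0 := LamOf l mu k0 - {x})) k"
    proof (cases "k = k0")
      case True then show ?thesis unfolding LamOf_def using R k0 by simp
    next
      case False
      then have "(\<lambda>c. count (PT l mu') (k, c)) = (\<lambda>c. count (PT l mu) (k, c))" using cnt by auto
      then show ?thesis unfolding LamOf_def using False by simp
    qed
  qed
  moreover have "x \<in> LamOf l mu k0" unfolding LamOf_def using R k0 by simp
  ultimately show ?thesis using k0 by blast
qed

theorem proposition7p5:
  fixes l n :: nat and mu R :: "cell set"
  assumes "1 \<le> l"
    and "is_partition mu" and "empty_core l mu" and "card mu = n * l"
    and "is_rim_hook l mu R"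
  shows "\<exists>Z :: ((nat \<Rightarrow> rat) \<times> rat) set. finite Z \<and> (\<forall>(c,d)\<in>Z. \<exists>k<l. c k \<noteq> 0) \<and>
     (\<forall>p :: nat \<Rightarrow> rat. (\<forall>(c,d)\<in>Z. (\<Sum>k<l. c k * p k) \<noteq> d) \<longrightarrow>
        (\<exists>k<l. \<exists>x\<in>EigMP l p mu k.
            EigMP l p (mu - R) = (EigMP l p mu)(k := EigMP l p mu k - {x})))"
proof -
  have l: "1 \<le> l" and part: "is_partition mu" using assms by auto
  have bal: "balanced l mu" using empty_core_balanced[OF assms(3) l part] .
  have part': "is_partition (mu - R)" using assms(5) unfolding is_rim_hook_def by auto
  have bal': "balanced l (mu - R)" using PT_hook(2)[OF part assms(5) l] bal by simp
  obtain pt where ptE: "PT l mu = PT l (mu - R) + {#pt#}" using PT_hook(1)[OF part assms(5) l] by blast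
  define N where "N = int (size (PT l mu))"
  have sz1: "int (size (PT l mu)) \<le> N" unfolding N_def by simp
  have sz2: "int (size (PT l (mu - R))) \<le> N" unfolding N_def ptE by simp
  show ?thesis
  proof (intro exI[of _ "Zset l N"] conjI allI impI)
    show "finite (Zset l N)" by (rule Zset_finite)
    show "\<forall>(c,d)\<in>Zset l N. \<exists>k<l. c k \<noteq> 0" by (rule Zset_nz[OF l])
    fix p :: "nat \<Rightarrow> rat" assume av: "\<forall>(c,d)\<in>Zset l N. (\<Sum>k<l. c k * p k) \<noteq> d"
    have E1: "EigMP l p mu = LamOf l mu" by (rule EigMP_eq[OF part l bal av sz1])
    have E2: "EigMP l p (mu - R) = LamOf l (mu - R)" by (rule EigMP_eq[OF part' l bal' av sz2])
    show "\<exists>k<l. \<exists>x\<in>EigMP l p mu k. EigMP l p (mu - R) = (EigMP l p mu)(k := EigMP l p mu k - {x})"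
      unfolding E1 E2 by (rule LamOf_remove[OF l part part' ptE])
  qed
qed


end
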